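(* There is a constant $C>0$ such that for every $\alpha>0$, every $n\ge0$, every $\psi_n\in\mathcal H$ in the $n$-photon sector and every $\psi_{n+1}\in\mathcal H$ in the $(n+1)$-photon sector (both with finite $H_f$-expectation), \[ \alpha^{3/2}\,\Big|\big(\sigma\cdot E^*\psi_{n+1},\,(p^2+H_f)^{-1}\,D^*\cdot D^*\psi_n\big)\Big|\le C\Big[\alpha^2(\Lambda+\Lambda^3)\|\psi_n\|^2+\alpha(\Lambda+\Lambda^2)(\psi_{n+1},H_f\psi_{n+1})\Big], \] where $D^*\cdot D^*=\sum_{j=1}^3D_j^*D_j^*$ and $\sigma\cdot E^*=\sum_{j=1}^3\sigma_jE_j^*$.
   Context: $p=-i\nabla_x$. Hilbert space $\mathcal H = L^2(\mathbb R^3;\mathbb C^2)\otimes\mathcal F_b(L^2(\mathbb R^3;\mathbb C^2))$ with bosonic operators $a_\lambda(k),a^*_\lambda(k)$ ($\lambda=1,2$) obeying the canonical commutation relations; the $n$-photon sector is the subspace of vectors whose Fock component is an $n$-particle state. Polarization vectors $\varepsilon_\lambda(k)\in\mathbb R^3$ with $\{k/|k|,\varepsilon_1(k),\varepsilon_2(k)\}$ orthonormal and $\varepsilon_\lambda(-k)=\pm\varepsilon_\lambda(k)$. Cutoff $\Lambda>0$, $\chi(|k|)=1$ for $|k|\le\Lambda$, $0$ otherwise. $G^\lambda(k)=\frac{\chi(|k|)}{2\pi|k|^{1/2}}\varepsilon_\lambda(k)$, $H^\lambda(k)=\frac{-i\chi(|k|)}{2\pi|k|^{1/2}}k\wedge\varepsilon_\lambda(k)$,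 $D(x)=\sum_\lambda\int G^\lambda(k)e^{ik\cdot x}a_\lambda(k)dk$, $E(x)=\sum_\lambda\int H^\lambda(k)e^{ik\cdot x}a_\lambda(k)dk$, with adjoints $D^*,E^*$; $\sigma_j$ are the Pauli matrices acting on the spin factor $\mathbb C^2$. $H_f=\sum_\lambda\int|k|a^*_\lambda(k)a_\lambda(k)dk$. *)

theory Defs
  imports "HOL-Analysis.Analysis"
begin

text \<open>A vector in the n-photon sector is represented by a function
  psi P ks, where P in R^3 is the electron momentum (Fourier variable of x),
  ks i = (k_i, lambda_i) (i < n) are the photon momenta and polarisations
  (lambda_i in {1,2}), and the value is a spinor in C^2.\<close>

type_synonym photons = "nat \<Rightarrow> (real^3) \<times> nat"
type_synonym sstate = "real^3 \<Rightarrow> photons \<Rightarrow> complex^2"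

definition photon_measure :: "((real^3) \<times> nat) measure" where
  "photon_measure = lborel \<Otimes>\<^sub>M count_space {1, 2}"

definition sector_measure :: "nat \<Rightarrow> ((real^3) \<times> photons) measure" where
  "sector_measure n = lborel \<Otimes>\<^sub>M (\<Pi>\<^sub>M i\<in>{..<n}. photon_measure)"

definition Hf_val :: "nat \<Rightarrow> photons \<Rightarrow> real" where
  "Hf_val n ks = (\<Sum>i<n. norm (fst (ks i)))"

definition in_sector :: "nat \<Rightarrow> sstate \<Rightarrow> bool" where
  "in_sector n psi \<longleftrightarrow>
     (\<lambda>(P, ks). psi P ks) \<in> borel_measurable (sector_measure n) \<and>
     integrable (sector_measure n) (\<lambda>(P, ks). (norm (psi P ks))\<^sup>2) \<and>
     (\<forall>\<pi>. \<pi> permutes {..<n} \<longrightarrow> (\<forall>P ks. psi P (ks \<circ> \<pi>) = psi P ks))"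

definition finite_Hf :: "nat \<Rightarrow> sstate \<Rightarrow> bool" where
  "finite_Hf n psi \<longleftrightarrow>
     integrable (sector_measure n) (\<lambda>(P, ks). Hf_val n ks * (norm (psi P ks))\<^sup>2)"

definition sq_norm :: "nat \<Rightarrow> sstate \<Rightarrow> real" where
  "sq_norm n psi = (\<integral>(P, ks). (norm (psi P ks))\<^sup>2 \<partial>sector_measure n)"

definition Hf_expect :: "nat \<Rightarrow> sstate \<Rightarrow> real" where
  "Hf_expect n psi = (\<integral>(P, ks). Hf_val n ks * (norm (psi P ks))\<^sup>2 \<partial>sector_measure n)"

definition drop_at :: "nat \<Rightarrow> nat \<Rightarrow> photons \<Rightarrow> photons" where
  "drop_at n i ks = (\<lambda>j. if j < n then (if j < i then ks j else ks (Suc j)) else undefined)"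

definition pol_ok :: "(nat \<Rightarrow> real^3 \<Rightarrow> real^3) \<Rightarrow> bool" where
  "pol_ok eps \<longleftrightarrow>
     (\<forall>l\<in>{1,2}. eps l \<in> borel_measurable borel) \<and>
     (\<forall>k. k \<noteq> 0 \<longrightarrow> norm (eps 1 k) = 1 \<and> norm (eps 2 k) = 1 \<and>
          eps 1 k \<bullet> eps 2 k = 0 \<and> k \<bullet> eps 1 k = 0 \<and> k \<bullet> eps 2 k = 0) \<and>
     (\<forall>l\<in>{1,2}. \<forall>k. eps l (- k) = eps l k \<or> eps l (- k) = - eps l k)"

definition chi :: "real \<Rightarrow> real^3 \<Rightarrow> real" where
  "chi \<Lambda> k = (if norm k \<le> \<Lambda> then 1 else 0)"

definition Gv :: "(nat \<Rightarrow> real^3 \<Rightarrow> real^3) \<Rightarrow> real \<Rightarrow> nat \<Rightarrow> real^3 \<Rightarrow> real^3" where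
  "Gv eps \<Lambda> l k = (chi \<Lambda> k / (2 * pi * sqrt (norm k))) *\<^sub>R eps l k"

definition Hv :: "(nat \<Rightarrow> real^3 \<Rightarrow> real^3) \<Rightarrow> real \<Rightarrow> nat \<Rightarrow> real^3 \<Rightarrow> complex^3" where
  "Hv eps \<Lambda> l k = (\<chi> j. (- \<i>) * complex_of_real (chi \<Lambda> k / (2 * pi * sqrt (norm k)))
                             * complex_of_real (cross3 k (eps l k) $ j))"

text \<open>D_j^* acting from the n- to the (n+1)-photon sector (momentum representation:
  e^{-ik.x} shifts the electron momentum P to P + k; a^* is the symmetrised creation).\<close>
definition Dstar :: "(nat \<Rightarrow> real^3 \<Rightarrow> real^3) \<Rightarrow> real \<Rightarrow> 3 \<Rightarrow> nat \<Rightarrow> sstate \<Rightarrow> sstate" where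
  "Dstar eps \<Lambda> j n psi = (\<lambda>P ks. complex_of_real (1 / sqrt (real (Suc n))) *s
      (\<Sum>i<Suc n. complex_of_real (Gv eps \<Lambda> (snd (ks i)) (fst (ks i)) $ j)
                    *s psi (P + fst (ks i)) (drop_at n i ks)))"

definition Estar :: "(nat \<Rightarrow> real^3 \<Rightarrow> real^3) \<Rightarrow> real \<Rightarrow> 3 \<Rightarrow> nat \<Rightarrow> sstate \<Rightarrow> sstate" where
  "Estar eps \<Lambda> j n psi = (\<lambda>P ks. complex_of_real (1 / sqrt (real (Suc n))) *s
      (\<Sum>i<Suc n. cnj (Hv eps \<Lambda> (snd (ks i)) (fst (ks i)) $ j)
                    *s psi (P + fst (ks i)) (drop_at n i ks)))"

definition pauli :: "3 \<Rightarrow> complex^2^2" where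
  "pauli j = (if j = 1 then vector [vector [0, 1], vector [1, 0]]
              else if j = 2 then vector [vector [0, - \<i>], vector [\<i>, 0]]
              else vector [vector [1, 0], vector [0, -1]])"

definition DstarDstar :: "(nat \<Rightarrow> real^3 \<Rightarrow> real^3) \<Rightarrow> real \<Rightarrow> nat \<Rightarrow> sstate \<Rightarrow> sstate" where
  "DstarDstar eps \<Lambda> n psi =
     (\<lambda>P ks. \<Sum>j\<in>UNIV. Dstar eps \<Lambda> j (Suc n) (Dstar eps \<Lambda> j n psi) P ks)"

definition sigmaEstar :: "(nat \<Rightarrow> real^3 \<Rightarrow> real^3) \<Rightarrow> real \<Rightarrow> nat \<Rightarrow> sstate \<Rightarrow> sstate" where
  "sigmaEstar eps \<Lambda> n psi = (\<lambda>P ks. \<Sum>j\<in>UNIV. pauli j *v Estar eps \<Lambda> j n psi P ks)"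

definition resolv :: "nat \<Rightarrow> sstate \<Rightarrow> sstate" where
  "resolv n psi = (\<lambda>P ks. complex_of_real (1 / ((norm P)\<^sup>2 + Hf_val n ks)) *s psi P ks)"

definition cinner2 :: "complex^2 \<Rightarrow> complex^2 \<Rightarrow> complex" where
  "cinner2 u v = (\<Sum>s\<in>UNIV. cnj (u $ s) * v $ s)"

definition sector_inner :: "nat \<Rightarrow> sstate \<Rightarrow> sstate \<Rightarrow> complex" where
  "sector_inner n phi psi = (\<integral>(P, ks). cinner2 (phi P ks) (psi P ks) \<partial>sector_measure n)"

end

theory Submission
  imports Defs
begin

lemma PiM_permute:
  fixes M :: "'a measure"
  assumes sf: "sigma_finite_measure M" and fin: "finite I" and t: "t permutes I"
  shows "distr (PiM I (\<lambda>_. M)) (PiM I (\<lambda>_. M)) (\<lambda>x. restrict (x \<circ> t) I) = PiM I (\<lambda>_. M)"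
proof -
  interpret product_sigma_finite "\<lambda>_. M" by (simp add: product_sigma_finite_def sf)
  have tI: "\<And>i. i \<in> I \<Longrightarrow> t i \<in> I" using t by (simp add: permutes_in_image)
  have meas: "(\<lambda>x. restrict (x \<circ> t) I) \<in> measurable (PiM I (\<lambda>_. M)) (PiM I (\<lambda>_. M))"
    by (rule measurable_restrict) (auto intro!: measurable_component_singleton tI)
  show ?thesis
  proof (rule PiM_eqI[OF fin])
    show "sets (distr (PiM I (\<lambda>_. M)) (PiM I (\<lambda>_. M)) (\<lambda>x. restrict (x \<circ> t) I)) = sets (PiM I (\<lambda>_. M))"
      by simp
    fix A assume A: "\<And>i. i \<in> I \<Longrightarrow> A i \<in> sets M"
    have pre: "(\<lambda>x. restrict (x \<circ> t) I) -` Pi\<^sub>E I A \<inter> space (PiM I (\<lambda>_. M)) = Pi\<^sub>E I (\<lambda>j. A (inv t j))"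
    proof -
      have invt: "\<And>j. j \<in> I \<Longrightarrow> t (inv t j) = j" "\<And>i. inv t (t i) = i"
        using t by (auto simp: permutes_inverses)
      have invI: "\<And>j. j \<in> I \<Longrightarrow> inv t j \<in> I"
        using t by (simp add: permutes_in_image permutes_inv)
      show ?thesis
        using A[THEN sets.sets_into_space] tI invt invI
        by (auto simp: space_PiM PiE_iff Pi_iff) (metis subsetD)+
    qed
    have "emeasure (distr (PiM I (\<lambda>_. M)) (PiM I (\<lambda>_. M)) (\<lambda>x. restrict (x \<circ> t) I)) (Pi\<^sub>E I A)
        = emeasure (PiM I (\<lambda>_. M)) (Pi\<^sub>E I (\<lambda>j. A (inv t j)))"
      using A meas by (subst emeasure_distr) (auto simp: pre intro!: sets_PiM_I_finite fin)
    also have "\<dots> = (\<Prod>j\<in>I. emeasure M (A (inv t j)))"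
      using A t fin by (intro emeasure_PiM) (auto simp: permutes_in_image permutes_inv)
    also have "\<dots> = (\<Prod>i\<in>I. emeasure M (A i))"
    proof -
      have "bij_betw (inv t) I I" using t by (simp add: permutes_imp_bij permutes_inv)
      then show ?thesis by (rule prod.reindex_bij_betw)
    qed
    finally show "emeasure (distr (PiM I (\<lambda>_. M)) (PiM I (\<lambda>_. M)) (\<lambda>x. restrict (x \<circ> t) I)) (Pi\<^sub>E I A) = (\<Prod>i\<in>I. emeasure M (A i))" .
  qed
qed

lemma sf_photon: "sigma_finite_measure photon_measure"
proof -
  interpret sigma_finite_measure "count_space {1::nat, 2}"
    by (rule sigma_finite_measure_count_space_finite) simp
  interpret pair_sigma_finite lborel "count_space {1::nat, 2}" ..
  show ?thesis unfolding photon_measure_def by (rule P.sigma_finite_measure_axioms)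
qed

abbreviation PP :: "nat \<Rightarrow> photons measure" where
  "PP n \<equiv> PiM {..<n} (\<lambda>_. photon_measure)"

lemma perm_t:
  assumes "i \<le> N"
  shows "(\<lambda>j. if j < i then j else if j < N then Suc j else if j = N then i else j) permutes {..<Suc N}"
    (is "?t permutes _")
proof -
  have inj: "inj_on ?t {..<Suc N}"
    using assms by (auto simp: inj_on_def split: if_splits)
  have sub: "?t ` {..<Suc N} \<subseteq> {..<Suc N}" using assms by auto
  have "?t ` {..<Suc N} = {..<Suc N}" using endo_inj_surj[OF _ sub inj] by simp
  then have "bij_betw ?t {..<Suc N} {..<Suc N}" using inj by (simp add: bij_betw_def)
  then show ?thesis
    by (rule bij_imp_permutes) simp
qed

lemma split_PiM:
  assumes iN: "i \<le> N"
    and G: "(\<lambda>(k, ks). G k ks) \<in> borel_measurable (photon_measure \<Otimes>\<^sub>M PP N)"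
  shows "(\<integral>\<^sup>+ks. G (ks i) (drop_at N i ks) \<partial>PP (Suc N)) = (\<integral>\<^sup>+k. \<integral>\<^sup>+ks. G k ks \<partial>PP N \<partial>photon_measure)"
proof -
  interpret product_sigma_finite "\<lambda>_::nat. photon_measure"
    by (simp add: product_sigma_finite_def sf_photon)
  define t where "t j = (if j < i then j else if j < N then Suc j else if j = N then i else j)" for j
  have t: "t permutes {..<Suc N}" unfolding t_def using perm_t[OF iN] .
  define F where "F x = G (x N) (restrict x {..<N})" for x :: photons
  have Fm: "F \<in> borel_measurable (PP (Suc N))"
  proof -
    have "(\<lambda>x. (x N, restrict x {..<N})) \<in> measurable (PP (Suc N)) (photon_measure \<Otimes>\<^sub>M PP N)"
      by (intro measurable_Pair measurable_component_singleton measurable_restrict_subset) auto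
    from measurable_comp[OF this G] show ?thesis by (simp add: F_def[abs_def] comp_def)
  qed
  have eq: "G (ks i) (drop_at N i ks) = F (restrict (ks \<circ> t) {..<Suc N})" for ks
  proof -
    have "restrict (restrict (ks \<circ> t) {..<Suc N}) {..<N} = drop_at N i ks"
      unfolding drop_at_def t_def using iN by (auto simp: restrict_def fun_eq_iff)
    moreover have "restrict (ks \<circ> t) {..<Suc N} N = ks i" unfolding t_def using iN by simp
    ultimately show ?thesis unfolding F_def by simp
  qed
  have mt: "(\<lambda>x. restrict (x \<circ> t) {..<Suc N}) \<in> measurable (PP (Suc N)) (PP (Suc N))"
  proof -
    have "\<And>j. j < Suc N \<Longrightarrow> t j < Suc N" using permutes_in_image[OF t] by simp
    then show ?thesis by (intro measurable_restrict) (auto intro!: measurable_component_singleton)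
  qed
  have "(\<integral>\<^sup>+ks. G (ks i) (drop_at N i ks) \<partial>PP (Suc N)) = (\<integral>\<^sup>+ks. F (restrict (ks \<circ> t) {..<Suc N}) \<partial>PP (Suc N))"
    by (simp add: eq)
  also have "\<dots> = (\<integral>\<^sup>+x. F x \<partial>distr (PP (Suc N)) (PP (Suc N)) (\<lambda>x. restrict (x \<circ> t) {..<Suc N}))"
    by (rule nn_integral_distr[symmetric, OF mt]) (simp add: Fm)
  also have "\<dots> = (\<integral>\<^sup>+x. F x \<partial>PP (Suc N))"
    by (simp add: PiM_permute[OF sf_photon _ t])
  also have "\<dots> = (\<integral>\<^sup>+ y. (\<integral>\<^sup>+ x. F (x(N := y)) \<partial>PP N) \<partial>photon_measure)"
    using product_nn_integral_insert_rev[of "{..<N}" N F] Fm by (simp add: lessThan_Suc)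
  also have "\<dots> = (\<integral>\<^sup>+k. \<integral>\<^sup>+ks. G k ks \<partial>PP N \<partial>photon_measure)"
  proof (rule nn_integral_cong, rule nn_integral_cong)
    fix y x assume "x \<in> space (PP N)"
    then have "restrict (x(N := y)) {..<N} = x"
      by (auto simp: space_PiM PiE_def extensional_def restrict_def fun_eq_iff)
    then show "F (x(N := y)) = G y x" by (simp add: F_def)
  qed
  finally show ?thesis .
qed

lemma sf_PP: "sigma_finite_measure (PP n)"
proof -
  interpret product_sigma_finite "\<lambda>_::nat. photon_measure"
    by (simp add: product_sigma_finite_def sf_photon)
  show ?thesis by (rule sigma_finite) simp
qed

lemma sf_sector: "sigma_finite_measure (sector_measure n)"
proof -
  interpret sigma_finite_measure "PP n" by (rule sf_PP)
  interpret pair_sigma_finite lborel "PP n" ..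
  show ?thesis unfolding sector_measure_def by (rule P.sigma_finite_measure_axioms)
qed

lemma meas_shift:
  "(\<lambda>(k::(real^3)\<times>nat, ks::photons). (k, (P + fst k, ks))) \<in> measurable (photon_measure \<Otimes>\<^sub>M PP N) (photon_measure \<Otimes>\<^sub>M sector_measure N)"
proof -
  have fm: "fst \<in> measurable photon_measure (lborel :: (real^3) measure)"
    unfolding photon_measure_def by (rule measurable_fst)
  have c2: "(\<lambda>z. P + fst (fst z)) \<in> borel_measurable (photon_measure \<Otimes>\<^sub>M PP N)"
    using measurable_compose[OF measurable_fst fm]
    by (intro borel_measurable_add) (auto simp: measurable_fst'')
  have "(\<lambda>z. (fst z, (P + fst (fst z), snd z))) \<in> measurable (photon_measure \<Otimes>\<^sub>M PP N) (photon_measure \<Otimes>\<^sub>M (lborel \<Otimes>\<^sub>M PP N))"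
    using c2 by (intro measurable_Pair measurable_snd measurable_fst) auto
  then show ?thesis by (simp add: sector_measure_def case_prod_beta')
qed

lemma meas_drop:
  assumes "i \<le> N"
  shows "drop_at N i \<in> measurable (PP (Suc N)) (PP N)"
proof -
  have eq: "drop_at N i = (\<lambda>ks j. (\<lambda>j ks. if j < N then (if j < i then ks j else ks (Suc j)) else undefined) j ks)"
    by (simp add: drop_at_def[abs_def])
  show ?thesis
    unfolding eq
  proof (rule measurable_PiM_single')
    fix j :: nat assume "j \<in> {..<N}"
    then show "(\<lambda>ks. if j < N then if j < i then ks j else ks (Suc j) else undefined) \<in> measurable (PP (Suc N)) photon_measure"
      by (auto intro!: measurable_component_singleton)
  next
    show "(\<lambda>ks j. if j < N then if j < i then ks j else ks (Suc j) else undefined) \<in> space (PP (Suc N)) \<rightarrow> (\<Pi>\<^sub>E j\<in>{..<N}. space photon_measure)"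
    proof (rule Pi_I)
      fix ks assume "ks \<in> space (PP (Suc N))"
      then have h: "\<And>j. j < Suc N \<Longrightarrow> ks j \<in> space photon_measure"
        unfolding space_PiM PiE_iff by blast
      show "(\<lambda>j. if j < N then if j < i then ks j else ks (Suc j) else undefined) \<in> (\<Pi>\<^sub>E j\<in>{..<N}. space photon_measure)"
        unfolding PiE_iff extensional_def using h by simp
    qed
  qed
qed

lemma split_sector:
  assumes iN: "i \<le> N"
    and f: "(\<lambda>(k, z). f k z) \<in> borel_measurable (photon_measure \<Otimes>\<^sub>M sector_measure N)"
  shows "(\<integral>\<^sup>+(P, ks). f (ks i) (P + fst (ks i), drop_at N i ks) \<partial>sector_measure (Suc N))
       = (\<integral>\<^sup>+k. \<integral>\<^sup>+z. f k z \<partial>sector_measure N \<partial>photon_measure)"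
proof -
  interpret PPS: sigma_finite_measure "PP (Suc N)" by (rule sf_PP)
  interpret PPN: sigma_finite_measure "PP N" by (rule sf_PP)
  interpret SN: sigma_finite_measure "sector_measure N" by (rule sf_sector)
  interpret Ph: sigma_finite_measure photon_measure by (rule sf_photon)
  interpret LP: pair_sigma_finite lborel "PP (Suc N)" ..
  interpret LPh: pair_sigma_finite lborel photon_measure ..
  note md[measurable] = meas_drop[OF iN]
  have dm: "(\<lambda>(P, ks). (ks i, (P + fst (ks i), drop_at N i ks))) \<in> measurable (lborel \<Otimes>\<^sub>M PP (Suc N)) (photon_measure \<Otimes>\<^sub>M sector_measure N)"
  proof -
    have c1: "(\<lambda>z. snd z i) \<in> measurable (lborel \<Otimes>\<^sub>M PP (Suc N)) photon_measure"
      using iN by (intro measurable_compose[OF measurable_snd] measurable_component_singleton) auto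
    have fm: "fst \<in> measurable photon_measure (lborel :: (real^3) measure)"
      unfolding photon_measure_def by (rule measurable_fst)
    have c2: "(\<lambda>z. fst z + fst (snd z i)) \<in> borel_measurable (lborel \<Otimes>\<^sub>M PP (Suc N))"
      using measurable_compose[OF c1 fm] by (intro borel_measurable_add) (auto simp: measurable_fst'')
    have c3: "(\<lambda>z. drop_at N i (snd z)) \<in> measurable (lborel \<Otimes>\<^sub>M PP (Suc N)) (PP N)"
      by (rule measurable_compose[OF measurable_snd md])
    have "(\<lambda>z. (snd z i, (fst z + fst (snd z i), drop_at N i (snd z)))) \<in> measurable (lborel \<Otimes>\<^sub>M PP (Suc N)) (photon_measure \<Otimes>\<^sub>M (lborel \<Otimes>\<^sub>M PP N))"
      using c1 c2 c3 by (intro measurable_Pair) auto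
    then show ?thesis by (simp add: sector_measure_def case_prod_beta')
  qed
  have m1: "(\<lambda>(P, ks). f (ks i) (P + fst (ks i), drop_at N i ks)) \<in> borel_measurable (lborel \<Otimes>\<^sub>M PP (Suc N))"
    using measurable_comp[OF dm f] by (simp add: comp_def case_prod_beta')
  have mG: "(\<lambda>(k, ks). f k (P + fst k, ks)) \<in> borel_measurable (photon_measure \<Otimes>\<^sub>M PP N)" for P
    using measurable_comp[OF meas_shift f] by (simp add: comp_def case_prod_beta')
  have "(\<integral>\<^sup>+(P, ks). f (ks i) (P + fst (ks i), drop_at N i ks) \<partial>sector_measure (Suc N))
      = (\<integral>\<^sup>+P. \<integral>\<^sup>+ks. f (ks i) (P + fst (ks i), drop_at N i ks) \<partial>PP (Suc N) \<partial>lborel)"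
    unfolding sector_measure_def using PPS.nn_integral_fst[OF m1] by simp
  also have "\<dots> = (\<integral>\<^sup>+P. \<integral>\<^sup>+k. \<integral>\<^sup>+ks. f k (P + fst k, ks) \<partial>PP N \<partial>photon_measure \<partial>lborel)"
    using split_PiM[OF iN mG] by simp
  also have "\<dots> = (\<integral>\<^sup>+k. \<integral>\<^sup>+P. \<integral>\<^sup>+ks. f k (P + fst k, ks) \<partial>PP N \<partial>lborel \<partial>photon_measure)"
  proof (rule LPh.Fubini'[symmetric])
    have mm: "(\<lambda>((P, k), ks). (k, (P + fst k, ks))) \<in> measurable ((lborel \<Otimes>\<^sub>M photon_measure) \<Otimes>\<^sub>M PP N) (photon_measure \<Otimes>\<^sub>M sector_measure N)"
    proof -
      have fm: "fst \<in> measurable photon_measure (lborel :: (real^3) measure)"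
        unfolding photon_measure_def by (rule measurable_fst)
      have c1: "(\<lambda>z. snd (fst z)) \<in> measurable ((lborel \<Otimes>\<^sub>M photon_measure) \<Otimes>\<^sub>M PP N) photon_measure"
        by (intro measurable_compose[OF measurable_fst] measurable_snd)
      have c2: "(\<lambda>z. fst (fst z) + fst (snd (fst z))) \<in> borel_measurable ((lborel \<Otimes>\<^sub>M photon_measure) \<Otimes>\<^sub>M PP N)"
        using measurable_compose[OF c1 fm] measurable_compose[OF measurable_fst measurable_fst]
        by (intro borel_measurable_add) (auto simp: measurable_fst'')
      have "(\<lambda>z. (snd (fst z), (fst (fst z) + fst (snd (fst z)), snd z))) \<in> measurable ((lborel \<Otimes>\<^sub>M photon_measure) \<Otimes>\<^sub>M PP N) (photon_measure \<Otimes>\<^sub>M (lborel \<Otimes>\<^sub>M PP N))"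
        using c1 c2 by (intro measurable_Pair measurable_snd) auto
      then show ?thesis by (simp add: sector_measure_def case_prod_beta')
    qed
    have "(\<lambda>z. (\<lambda>((P, k), ks). f k (P + fst k, ks)) z) \<in> borel_measurable ((lborel \<Otimes>\<^sub>M photon_measure) \<Otimes>\<^sub>M PP N)"
      using measurable_comp[OF mm f] by (simp add: comp_def case_prod_beta')
    from PPN.borel_measurable_nn_integral_fst[OF this]
    show "(\<lambda>(P, k). \<integral>\<^sup>+ks. f k (P + fst k, ks) \<partial>PP N) \<in> borel_measurable (lborel \<Otimes>\<^sub>M photon_measure)"
      by (simp add: case_prod_beta')
  qed
  also have "\<dots> = (\<integral>\<^sup>+k. \<integral>\<^sup>+P. \<integral>\<^sup>+ks. f k (P, ks) \<partial>PP N \<partial>lborel \<partial>photon_measure)"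
  proof (rule nn_integral_cong)
    fix k assume "k \<in> space photon_measure"
    have "(\<lambda>z. f k z) \<in> borel_measurable (lborel \<Otimes>\<^sub>M PP N)"
      using measurable_compose_Pair1[OF \<open>k \<in> space photon_measure\<close> f] by (simp add: sector_measure_def)
    from PPN.borel_measurable_nn_integral_fst[OF this]
    have Q: "(\<lambda>P. \<integral>\<^sup>+ks. f k (P, ks) \<partial>PP N) \<in> borel_measurable lborel" by simp
    have "(\<integral>\<^sup>+P. \<integral>\<^sup>+ks. f k (P + fst k, ks) \<partial>PP N \<partial>lborel) = (\<integral>\<^sup>+P. (\<lambda>P. \<integral>\<^sup>+ks. f k (P, ks) \<partial>PP N) (fst k + P) \<partial>lborel)"
      by (simp add: add.commute)
    also have "\<dots> = (\<integral>\<^sup>+P. (\<integral>\<^sup>+ks. f k (P, ks) \<partial>PP N) \<partial>distr lborel borel ((+) (fst k)))"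
      using Q by (intro nn_integral_distr[symmetric]) auto
    also have "\<dots> = (\<integral>\<^sup>+P. \<integral>\<^sup>+ks. f k (P, ks) \<partial>PP N \<partial>lborel)"
      by (simp add: lborel_distr_plus)
    finally show "(\<integral>\<^sup>+P. \<integral>\<^sup>+ks. f k (P + fst k, ks) \<partial>PP N \<partial>lborel) = (\<integral>\<^sup>+P. \<integral>\<^sup>+ks. f k (P, ks) \<partial>PP N \<partial>lborel)" .
  qed
  also have "\<dots> = (\<integral>\<^sup>+k. \<integral>\<^sup>+z. f k z \<partial>sector_measure N \<partial>photon_measure)"
  proof (rule nn_integral_cong)
    fix k assume k: "k \<in> space photon_measure"
    have mk: "(\<lambda>z. f k z) \<in> borel_measurable (lborel \<Otimes>\<^sub>M PP N)"
      using measurable_compose_Pair1[OF k f] by (simp add: sector_measure_def)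
    show "(\<integral>\<^sup>+P. \<integral>\<^sup>+ks. f k (P, ks) \<partial>PP N \<partial>lborel) = (\<integral>\<^sup>+z. f k z \<partial>sector_measure N)"
      unfolding sector_measure_def using PPN.nn_integral_fst[OF mk] by simp
  qed
  finally show ?thesis .
qed

lemma photon_int:
  assumes f: "f \<in> borel_measurable (lborel :: (real^3) measure)"
  shows "(\<integral>\<^sup>+k. f (fst k) \<partial>photon_measure) = 2 * (\<integral>\<^sup>+x. f x \<partial>lborel)"
proof -
  interpret C: sigma_finite_measure "count_space {1::nat, 2}"
    by (rule sigma_finite_measure_count_space_finite) simp
  have m: "(\<lambda>k. f (fst k)) \<in> borel_measurable (lborel \<Otimes>\<^sub>M count_space {1::nat, 2})"
    using f by (rule measurable_compose[OF measurable_fst])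
  have "(\<integral>\<^sup>+k. f (fst k) \<partial>photon_measure) = (\<integral>\<^sup>+x. \<integral>\<^sup>+y. f x \<partial>count_space {1::nat, 2} \<partial>lborel)"
    unfolding photon_measure_def using C.nn_integral_fst[OF m] by simp
  also have "\<dots> = (\<integral>\<^sup>+x. 2 * f x \<partial>lborel)"
    by (intro nn_integral_cong) (simp add: nn_integral_count_space_finite; metis mult_2 mult_2_right)
  also have "\<dots> = 2 * (\<integral>\<^sup>+x. f x \<partial>lborel)"
    using f by (rule nn_integral_cmult)
  finally show ?thesis .
qed

lemma chi_meas[measurable]: "chi \<Lambda> \<in> borel_measurable borel"
  unfolding chi_def[abs_def] by measurable

lemma chi_indicator: "chi \<Lambda> k = indicator (cball 0 \<Lambda>) k"
  by (simp add: chi_def indicator_def dist_norm)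

lemma vol_cball3: "r \<ge> 0 \<Longrightarrow> emeasure lborel (cball (0::real^3) r) = ennreal (4 / 3 * pi * r ^ 3)"
  by (simp add: emeasure_cball unit_ball_vol_3)

lemma chi_int:
  assumes "\<Lambda> > 0"
  shows "(\<integral>\<^sup>+k. ennreal (chi \<Lambda> (fst k)) \<partial>photon_measure) = 2 * ennreal (4 / 3 * pi * \<Lambda> ^ 3)"
proof -
  have "(\<integral>\<^sup>+k. ennreal (chi \<Lambda> (fst k)) \<partial>photon_measure) = 2 * (\<integral>\<^sup>+x. ennreal (chi \<Lambda> x) \<partial>lborel)"
    by (rule photon_int) measurable
  also have "(\<integral>\<^sup>+x. ennreal (chi \<Lambda> x) \<partial>lborel) = (\<integral>\<^sup>+x. indicator (cball (0::real^3) \<Lambda>) x \<partial>lborel)"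
    by (simp add: chi_indicator ennreal_indicator)
  also have "\<dots> = ennreal (4 / 3 * pi * \<Lambda> ^ 3)"
    using assms by (simp add: vol_cball3)
  finally show ?thesis .
qed

definition ww :: "real \<Rightarrow> real^3 \<Rightarrow> real" where
  "ww \<Lambda> k = chi \<Lambda> k / (4 * pi^2 * (norm k)^2)"

lemma ww_meas[measurable]: "ww \<Lambda> \<in> borel_measurable borel"
  unfolding ww_def[abs_def] by measurable

lemma dyadic_bound:
  fixes t \<Lambda> :: real
  assumes "0 < t" "t \<le> \<Lambda>"
  obtains j where "t \<le> \<Lambda> / 2 ^ j" "1 / t^2 \<le> 4 ^ Suc j / \<Lambda>^2"
proof -
  have ex: "\<exists>n. \<Lambda> / t < 2 ^ n" by (rule real_arch_pow) simp
  define J where "J = (LEAST n. \<Lambda> / t < 2 ^ n)"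
  have J: "\<Lambda> / t < 2 ^ J" unfolding J_def by (rule LeastI_ex[OF ex])
  have "\<Lambda> / t \<ge> 1" using assms by simp
  have "J \<noteq> 0"
  proof
    assume "J = 0"
    with J have "\<Lambda> / t < 1" by simp
    with \<open>\<Lambda> / t \<ge> 1\<close> show False by simp
  qed
  then obtain j where Jj: "J = Suc j" by (cases J) auto
  have "\<not> (\<Lambda> / t < 2 ^ j)" using Jj unfolding J_def by (metis lessI not_less_Least)
  then have "2 ^ j \<le> \<Lambda> / t" by simp
  then have 1: "t \<le> \<Lambda> / 2 ^ j" using assms by (simp add: field_simps)
  have "\<Lambda> < 2 ^ Suc j * t" using J Jj assms by (simp add: field_simps)
  then have "\<Lambda>^2 < (2 ^ Suc j * t)^2" using assms by (intro power_strict_mono) auto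
  also have "(2 ^ Suc j * t)^2 = 4 ^ Suc j * t^2"
  proof -
    have e: "(4::real) ^ Suc j = 2 ^ Suc j * 2 ^ Suc j" by (simp flip: power_mult_distrib)
    show ?thesis unfolding e by (simp add: power2_eq_square)
  qed
  finally have "\<Lambda>^2 < 4 ^ Suc j * t^2" .
  then have 2: "1 / t^2 \<le> 4 ^ Suc j / \<Lambda>^2" using assms by (simp add: field_simps)
  show ?thesis using 1 2 by (rule that)
qed

lemma ww_pointwise:
  assumes "\<Lambda> > 0"
  shows "ennreal (ww \<Lambda> k) \<le> (\<Sum>j. ennreal (4 ^ Suc j / (4 * pi^2 * \<Lambda>^2)) * indicator (cball (0::real^3) (\<Lambda> / 2 ^ j)) k)"
proof (cases "k = 0 \<or> norm k > \<Lambda>")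
  case True
  then have "ww \<Lambda> k = 0" by (auto simp: ww_def chi_def)
  then show ?thesis by simp
next
  case False
  then have t: "0 < norm k" "norm k \<le> \<Lambda>" by auto
  obtain j where j: "norm k \<le> \<Lambda> / 2 ^ j" "1 / (norm k)^2 \<le> 4 ^ Suc j / \<Lambda>^2"
    using dyadic_bound[OF t] by blast
  have "ww \<Lambda> k = (1 / (norm k)^2) / (4 * pi^2)" using t by (simp add: ww_def chi_def)
  also have "\<dots> \<le> (4 ^ Suc j / \<Lambda>^2) / (4 * pi^2)" by (rule divide_right_mono[OF j(2)]) simp
  also have "\<dots> = 4 ^ Suc j / (4 * pi^2 * \<Lambda>^2)" by simp
  finally have "ennreal (ww \<Lambda> k) \<le> ennreal (4 ^ Suc j / (4 * pi^2 * \<Lambda>^2)) * indicator (cball (0::real^3) (\<Lambda> / 2 ^ j)) k"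
    using j(1) by (simp add: dist_norm)
  also have "\<dots> \<le> (\<Sum>j. ennreal (4 ^ Suc j / (4 * pi^2 * \<Lambda>^2)) * indicator (cball (0::real^3) (\<Lambda> / 2 ^ j)) k)"
    using sum_le_suminf[OF summableI, of "{j}"] by simp
  finally show ?thesis .
qed

lemma ww_int_lborel:
  assumes L: "\<Lambda> > 0"
  shows "(\<integral>\<^sup>+k. ennreal (ww \<Lambda> k) \<partial>lborel) \<le> ennreal \<Lambda>"
proof -
  have "(\<integral>\<^sup>+k. ennreal (ww \<Lambda> k) \<partial>lborel) \<le> (\<integral>\<^sup>+k. (\<Sum>j. ennreal (4 ^ Suc j / (4 * pi^2 * \<Lambda>^2)) * indicator (cball (0::real^3) (\<Lambda> / 2 ^ j)) k) \<partial>lborel)"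
    by (intro nn_integral_mono) (rule ww_pointwise[OF L])
  also have "\<dots> = (\<Sum>j. \<integral>\<^sup>+k. ennreal (4 ^ Suc j / (4 * pi^2 * \<Lambda>^2)) * indicator (cball (0::real^3) (\<Lambda> / 2 ^ j)) k \<partial>lborel)"
    by (intro nn_integral_suminf borel_measurable_times_ennreal) (auto intro!: borel_measurable_indicator borel_closed)
  also have "\<dots> = (\<Sum>j. ennreal (4 * \<Lambda> / (3 * pi) * (1/2)^j))"
  proof (intro suminf_cong)
    fix j :: nat
    have pos: "\<Lambda> / 2 ^ j \<ge> 0" using L by simp
    have "(\<integral>\<^sup>+k. ennreal (4 ^ Suc j / (4 * pi^2 * \<Lambda>^2)) * indicator (cball (0::real^3) (\<Lambda> / 2 ^ j)) k \<partial>lborel)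
       = ennreal (4 ^ Suc j / (4 * pi^2 * \<Lambda>^2)) * ennreal (4 / 3 * pi * (\<Lambda> / 2 ^ j) ^ 3)"
      using pos by (simp add: nn_integral_cmult_indicator vol_cball3)
    also have "\<dots> = ennreal (4 ^ Suc j / (4 * pi^2 * \<Lambda>^2) * (4 / 3 * pi * (\<Lambda> / 2 ^ j) ^ 3))"
      using pos by (intro ennreal_mult[symmetric]) auto
    also have "4 ^ Suc j / (4 * pi^2 * \<Lambda>^2) * (4 / 3 * pi * (\<Lambda> / 2 ^ j) ^ 3) = 4 * \<Lambda> / (3 * pi) * (1/2)^j"
    proof -
      have e1: "(4::real) ^ j = 2 ^ j * 2 ^ j" by (simp flip: power_mult_distrib)
      have e2: "(\<Lambda> / 2 ^ j) ^ 3 = \<Lambda>^3 / (2^j * 2^j * 2^j)" by (simp add: power_divide power3_eq_cube)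
      show ?thesis using L unfolding e2 by (simp add: e1 power_one_over field_simps power2_eq_square power3_eq_cube)
    qed
    finally show "(\<integral>\<^sup>+k. ennreal (4 ^ Suc j / (4 * pi^2 * \<Lambda>^2)) * indicator (cball (0::real^3) (\<Lambda> / 2 ^ j)) k \<partial>lborel) = ennreal (4 * \<Lambda> / (3 * pi) * (1/2)^j)" .
  qed
  also have "\<dots> = ennreal (\<Sum>j. 4 * \<Lambda> / (3 * pi) * (1/2)^j)"
    using L by (intro suminf_ennreal2) (auto intro!: summable_mult)
  also have "(\<Sum>j. 4 * \<Lambda> / (3 * pi) * (1/2::real)^j) = 8 * \<Lambda> / (3 * pi)"
    by (subst suminf_mult) (auto simp: suminf_geometric)
  also have "ennreal (8 * \<Lambda> / (3 * pi)) \<le> ennreal \<Lambda>"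
    using L pi_gt3 by (intro ennreal_leI) (simp add: field_simps)
  finally show ?thesis .
qed

lemma ww_int:
  assumes "\<Lambda> > 0"
  shows "(\<integral>\<^sup>+k. ennreal (ww \<Lambda> (fst k)) \<partial>photon_measure) \<le> ennreal (2 * \<Lambda>)"
proof -
  have "(\<integral>\<^sup>+k. ennreal (ww \<Lambda> (fst k)) \<partial>photon_measure) = 2 * (\<integral>\<^sup>+x. ennreal (ww \<Lambda> x) \<partial>lborel)"
    by (rule photon_int) measurable
  also have "\<dots> \<le> 2 * ennreal \<Lambda>" using ww_int_lborel[OF assms] by (rule mult_left_mono) simp
  finally show ?thesis using assms ennreal_mult[of 2 \<Lambda>] by simp
qed

definition hh :: "real \<Rightarrow> real^3 \<Rightarrow> real" where
  "hh \<Lambda> k = chi \<Lambda> k * sqrt (norm k) / (2 * pi)"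

definition gg :: "real \<Rightarrow> real^3 \<Rightarrow> real" where
  "gg \<Lambda> k = chi \<Lambda> k / (2 * pi * sqrt (norm k))"

lemma chi_cases: "chi \<Lambda> k = 0 \<or> chi \<Lambda> k = 1"
  by (simp add: chi_def)

lemma chi_nonneg[simp]: "0 \<le> chi \<Lambda> k"
  by (simp add: chi_def)

lemma hh_nonneg[simp]: "0 \<le> hh \<Lambda> k" by (simp add: hh_def)
lemma gg_nonneg[simp]: "0 \<le> gg \<Lambda> k" by (simp add: gg_def)
lemma ww_nonneg[simp]: "0 \<le> ww \<Lambda> k" by (simp add: ww_def)

lemma norm_vec2: "norm (v::complex^2) = sqrt ((cmod (v$1))\<^sup>2 + (cmod (v$2))\<^sup>2)"
  by (simp add: norm_vec_def L2_set_def sum_2)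

lemma norm_smult: "norm (c *s (x::complex^'n)) = cmod c * norm x"
proof -
  have "norm (c *s x) = L2_set (\<lambda>i. cmod c * norm (x $ i)) UNIV"
    by (simp add: norm_vec_def norm_mult)
  also have "\<dots> = cmod c * L2_set (\<lambda>i. norm (x $ i)) UNIV"
    by (rule L2_set_right_distrib[symmetric]) simp
  finally show ?thesis by (simp add: norm_vec_def)
qed

lemma cinner2_bound: "cmod (cinner2 u v) \<le> norm u * norm v"
proof -
  have "cmod (cinner2 u v) \<le> (\<Sum>s\<in>UNIV. cmod (cnj (u$s) * v$s))"
    unfolding cinner2_def by (rule norm_sum)
  also have "\<dots> = (\<Sum>s\<in>UNIV. \<bar>cmod (u$s)\<bar> * \<bar>cmod (v$s)\<bar>)"
    by (simp add: norm_mult)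
  also have "\<dots> \<le> L2_set (\<lambda>s. cmod (u$s)) UNIV * L2_set (\<lambda>s. cmod (v$s)) UNIV"
    by (rule L2_set_mult_ineq)
  finally show ?thesis by (simp add: norm_vec_def)
qed

lemma pauli_norm: "norm (pauli j *v x) = norm x"
proof -
  have mv: "(A *v x) $ r = A$r$1 * x$1 + A$r$2 * x$2" for A :: "complex^2^2" and r
    by (simp add: matrix_vector_mult_def sum_2)
  have n: "norm (y::complex^2) = norm x" if "cmod (y$1) = cmod (x$2)" "cmod (y$2) = cmod (x$1)" for y
    using that by (simp add: norm_vec2 add.commute)
  have n2: "norm (y::complex^2) = norm x" if "cmod (y$1) = cmod (x$1)" "cmod (y$2) = cmod (x$2)" for y
    using that by (simp add: norm_vec2)
  show ?thesis
  proof (cases "j = 1")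
    case True
    then show ?thesis by (intro n) (simp_all add: mv pauli_def)
  next
    case F1: False
    show ?thesis
    proof (cases "j = 2")
      case True
      then have "pauli j = vector [vector [0, - \<i>], vector [\<i>, 0]]" using F1 by (simp add: pauli_def)
      then show ?thesis by (intro n) (simp_all add: mv norm_mult)
    next
      case False
      then have "pauli j = vector [vector [1, 0], vector [0, -1]]" using F1 by (simp add: pauli_def)
      then show ?thesis by (intro n2) (simp_all add: mv)
    qed
  qed
qed

lemma Gv_bound:
  assumes "pol_ok eps" "l \<in> {1, 2}"
  shows "\<bar>Gv eps \<Lambda> l k $ j\<bar> \<le> gg \<Lambda> k"
proof (cases "k = 0")
  case True then show ?thesis by (simp add: Gv_def gg_def)
next
  case False
  then have ne: "norm (eps l k) = 1" using assms by (auto simp: pol_ok_def)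
  have "\<bar>Gv eps \<Lambda> l k $ j\<bar> = \<bar>chi \<Lambda> k / (2 * pi * sqrt (norm k))\<bar> * \<bar>eps l k $ j\<bar>"
    by (simp add: Gv_def abs_mult)
  also have "\<dots> \<le> \<bar>chi \<Lambda> k / (2 * pi * sqrt (norm k))\<bar> * 1"
    using component_le_norm_cart[of "eps l k" j] ne by (intro mult_left_mono) auto
  also have "\<dots> = gg \<Lambda> k" by (simp add: gg_def)
  finally show ?thesis .
qed

lemma Hv_bound:
  assumes "pol_ok eps" "l \<in> {1, 2}"
  shows "cmod (Hv eps \<Lambda> l k $ j) \<le> hh \<Lambda> k"
proof (cases "k = 0")
  case True then show ?thesis by (simp add: Hv_def hh_def)
next
  case False
  then have ne: "norm (eps l k) = 1" using assms by (auto simp: pol_ok_def)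
  have cr: "norm (cross3 k (eps l k)) \<le> norm k"
  proof -
    have "(norm (cross3 k (eps l k)))\<^sup>2 \<le> (norm k * norm (eps l k))\<^sup>2"
      using norm_cross_dot[of k "eps l k"] zero_le_power2[of "k \<bullet> eps l k"] by linarith
    then have "(norm (cross3 k (eps l k)))\<^sup>2 \<le> (norm k)\<^sup>2" by (simp only: ne mult_1_right)
    then show ?thesis by (rule power2_le_imp_le) (rule norm_ge_zero)
  qed
  have "cmod (Hv eps \<Lambda> l k $ j) = \<bar>chi \<Lambda> k / (2 * pi * sqrt (norm k))\<bar> * \<bar>cross3 k (eps l k) $ j\<bar>"
    by (simp add: Hv_def norm_mult norm_divide abs_mult)
  also have "\<dots> \<le> \<bar>chi \<Lambda> k / (2 * pi * sqrt (norm k))\<bar> * norm k"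
    using component_le_norm_cart[of "cross3 k (eps l k)" j] cr by (intro mult_left_mono) auto
  also have "\<dots> = hh \<Lambda> k"
  proof -
    have "norm k = sqrt (norm k) * sqrt (norm k)" by simp
    then show ?thesis using False by (simp add: hh_def field_simps)
  qed
  finally show ?thesis .
qed

definition okp :: "nat \<Rightarrow> photons \<Rightarrow> bool" where
  "okp m ks \<longleftrightarrow> (\<forall>i<m. snd (ks i) \<in> {1, 2})"

lemma drop_at_less: "l < N \<Longrightarrow> drop_at N i ks l = (if l < i then ks l else ks (Suc l))"
  by (simp add: drop_at_def)

lemma drop_ok: "okp (Suc N) ks \<Longrightarrow> okp N (drop_at N i ks)"
  by (auto simp: okp_def drop_at_less)

lemma sum3_const: "(\<Sum>j\<in>(UNIV::3 set). (c::real)) = 3 * c"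
  by simp

lemma cmod_inv_sqrt: "cmod (complex_of_real (1 / sqrt (real (Suc N)))) = 1 / sqrt (real (Suc N))"
  by (simp only: norm_of_real) simp

lemma Estar_bound:
  assumes "pol_ok eps" "okp (Suc N) ks"
  shows "norm (Estar eps \<Lambda> j N psi P ks) \<le> (1 / sqrt (Suc N)) * (\<Sum>i<Suc N. hh \<Lambda> (fst (ks i)) * norm (psi (P + fst (ks i)) (drop_at N i ks)))"
proof -
  have "norm (Estar eps \<Lambda> j N psi P ks) = (1 / sqrt (Suc N)) * norm (\<Sum>i<Suc N. cnj (Hv eps \<Lambda> (snd (ks i)) (fst (ks i)) $ j) *s psi (P + fst (ks i)) (drop_at N i ks))"
    unfolding Estar_def norm_smult cmod_inv_sqrt ..
  also have "\<dots> \<le> (1 / sqrt (Suc N)) * (\<Sum>i<Suc N. hh \<Lambda> (fst (ks i)) * norm (psi (P + fst (ks i)) (drop_at N i ks)))"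
  proof (rule mult_left_mono)
    have "norm (\<Sum>i<Suc N. cnj (Hv eps \<Lambda> (snd (ks i)) (fst (ks i)) $ j) *s psi (P + fst (ks i)) (drop_at N i ks))
       \<le> (\<Sum>i<Suc N. norm (cnj (Hv eps \<Lambda> (snd (ks i)) (fst (ks i)) $ j) *s psi (P + fst (ks i)) (drop_at N i ks)))"
      by (rule norm_sum)
    also have "\<dots> \<le> (\<Sum>i<Suc N. hh \<Lambda> (fst (ks i)) * norm (psi (P + fst (ks i)) (drop_at N i ks)))"
    proof (rule sum_mono)
      fix i assume "i \<in> {..<Suc N}"
      then have "snd (ks i) \<in> {1, 2}" using assms(2) by (auto simp: okp_def)
      then show "norm (cnj (Hv eps \<Lambda> (snd (ks i)) (fst (ks i)) $ j) *s psi (P + fst (ks i)) (drop_at N i ks)) \<le> hh \<Lambda> (fst (ks i)) * norm (psi (P + fst (ks i)) (drop_at N i ks))"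
        unfolding norm_smult complex_mod_cnj using Hv_bound[OF assms(1)] by (intro mult_right_mono) auto
    qed
    finally show "norm (\<Sum>i<Suc N. cnj (Hv eps \<Lambda> (snd (ks i)) (fst (ks i)) $ j) *s psi (P + fst (ks i)) (drop_at N i ks))
       \<le> (\<Sum>i<Suc N. hh \<Lambda> (fst (ks i)) * norm (psi (P + fst (ks i)) (drop_at N i ks)))" .
  qed simp
  finally show ?thesis .
qed

lemma sigmaE_bound:
  assumes "pol_ok eps" "okp (Suc N) ks"
  shows "norm (sigmaEstar eps \<Lambda> N psi P ks) \<le> 3 * ((1 / sqrt (Suc N)) * (\<Sum>i<Suc N. hh \<Lambda> (fst (ks i)) * norm (psi (P + fst (ks i)) (drop_at N i ks))))"
proof -
  have "norm (sigmaEstar eps \<Lambda> N psi P ks) \<le> (\<Sum>j\<in>UNIV. norm (pauli j *v Estar eps \<Lambda> j N psi P ks))"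
    unfolding sigmaEstar_def by (rule norm_sum)
  also have "\<dots> \<le> (\<Sum>j\<in>(UNIV::3 set). (1 / sqrt (Suc N)) * (\<Sum>i<Suc N. hh \<Lambda> (fst (ks i)) * norm (psi (P + fst (ks i)) (drop_at N i ks))))"
    unfolding pauli_norm by (intro sum_mono Estar_bound assms)
  finally show ?thesis unfolding sum3_const .
qed

lemma Dstar_bound:
  assumes "pol_ok eps" "okp (Suc M) ks"
  shows "norm (Dstar eps \<Lambda> j M phi P ks) \<le> (1 / sqrt (Suc M)) * (\<Sum>i<Suc M. gg \<Lambda> (fst (ks i)) * norm (phi (P + fst (ks i)) (drop_at M i ks)))"
proof -
  have "norm (Dstar eps \<Lambda> j M phi P ks) = (1 / sqrt (Suc M)) * norm (\<Sum>i<Suc M. complex_of_real (Gv eps \<Lambda> (snd (ks i)) (fst (ks i)) $ j) *s phi (P + fst (ks i)) (drop_at M i ks))"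
    unfolding Dstar_def norm_smult cmod_inv_sqrt ..
  also have "\<dots> \<le> (1 / sqrt (Suc M)) * (\<Sum>i<Suc M. gg \<Lambda> (fst (ks i)) * norm (phi (P + fst (ks i)) (drop_at M i ks)))"
  proof (rule mult_left_mono)
    have "norm (\<Sum>i<Suc M. complex_of_real (Gv eps \<Lambda> (snd (ks i)) (fst (ks i)) $ j) *s phi (P + fst (ks i)) (drop_at M i ks))
       \<le> (\<Sum>i<Suc M. norm (complex_of_real (Gv eps \<Lambda> (snd (ks i)) (fst (ks i)) $ j) *s phi (P + fst (ks i)) (drop_at M i ks)))"
      by (rule norm_sum)
    also have "\<dots> \<le> (\<Sum>i<Suc M. gg \<Lambda> (fst (ks i)) * norm (phi (P + fst (ks i)) (drop_at M i ks)))"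
    proof (rule sum_mono)
      fix i assume "i \<in> {..<Suc M}"
      then have "snd (ks i) \<in> {1, 2}" using assms(2) by (auto simp: okp_def)
      then show "norm (complex_of_real (Gv eps \<Lambda> (snd (ks i)) (fst (ks i)) $ j) *s phi (P + fst (ks i)) (drop_at M i ks)) \<le> gg \<Lambda> (fst (ks i)) * norm (phi (P + fst (ks i)) (drop_at M i ks))"
        unfolding norm_smult norm_of_real using Gv_bound[OF assms(1)] by (intro mult_right_mono) auto
    qed
    finally show "norm (\<Sum>i<Suc M. complex_of_real (Gv eps \<Lambda> (snd (ks i)) (fst (ks i)) $ j) *s phi (P + fst (ks i)) (drop_at M i ks))
       \<le> (\<Sum>i<Suc M. gg \<Lambda> (fst (ks i)) * norm (phi (P + fst (ks i)) (drop_at M i ks)))" .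
  qed simp
  finally show ?thesis .
qed

lemma DD_bound:
  assumes "pol_ok eps" "okp (Suc (Suc n)) ks"
  shows "norm (DstarDstar eps \<Lambda> n psi P ks) \<le> 3 * ((1 / sqrt (Suc (Suc n))) * (1 / sqrt (Suc n)) *
     (\<Sum>i<Suc (Suc n). \<Sum>l<Suc n. gg \<Lambda> (fst (ks i)) * gg \<Lambda> (fst (drop_at (Suc n) i ks l)) *
        norm (psi (P + fst (ks i) + fst (drop_at (Suc n) i ks l)) (drop_at n l (drop_at (Suc n) i ks)))))"
proof -
  let ?B = "(1 / sqrt (Suc (Suc n))) * (1 / sqrt (Suc n)) *
     (\<Sum>i<Suc (Suc n). \<Sum>l<Suc n. gg \<Lambda> (fst (ks i)) * gg \<Lambda> (fst (drop_at (Suc n) i ks l)) *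
        norm (psi (P + fst (ks i) + fst (drop_at (Suc n) i ks l)) (drop_at n l (drop_at (Suc n) i ks))))"
  have j: "norm (Dstar eps \<Lambda> j (Suc n) (Dstar eps \<Lambda> j n psi) P ks) \<le> ?B" for j
  proof -
    have "norm (Dstar eps \<Lambda> j (Suc n) (Dstar eps \<Lambda> j n psi) P ks)
       \<le> (1 / sqrt (Suc (Suc n))) * (\<Sum>i<Suc (Suc n). gg \<Lambda> (fst (ks i)) * norm (Dstar eps \<Lambda> j n psi (P + fst (ks i)) (drop_at (Suc n) i ks)))"
      by (rule Dstar_bound[OF assms])
    also have "\<dots> \<le> (1 / sqrt (Suc (Suc n))) * (\<Sum>i<Suc (Suc n). gg \<Lambda> (fst (ks i)) * ((1 / sqrt (Suc n)) *
        (\<Sum>l<Suc n. gg \<Lambda> (fst (drop_at (Suc n) i ks l)) * norm (psi (P + fst (ks i) + fst (drop_at (Suc n) i ks l)) (drop_at n l (drop_at (Suc n) i ks))))))"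
      using Dstar_bound[OF assms(1) drop_ok[OF assms(2)]]
      by (intro mult_left_mono sum_mono mult_left_mono) auto
    also have "\<dots> = ?B"
      unfolding sum_distrib_left by (intro sum.cong refl) (simp only: mult_ac)
    finally show ?thesis .
  qed
  have "norm (DstarDstar eps \<Lambda> n psi P ks) \<le> (\<Sum>j\<in>UNIV. norm (Dstar eps \<Lambda> j (Suc n) (Dstar eps \<Lambda> j n psi) P ks))"
    unfolding DstarDstar_def by (rule norm_sum)
  also have "\<dots> \<le> (\<Sum>j\<in>(UNIV::3 set). ?B)"
    by (intro sum_mono j)
  finally show ?thesis unfolding sum3_const .
qed

lemma amgm:
  fixes X Y c a b \<tau> :: real
  assumes "X \<ge> 0" "Y \<ge> 0" "\<tau> > 0" "c\<^sup>2 = X * Y" "c \<ge> 0" "a \<ge> 0" "b \<ge> 0"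
  shows "c * a * b \<le> 1/2 * (X * a\<^sup>2 / \<tau> + \<tau> * (Y * b\<^sup>2))"
proof -
  have c: "c = sqrt X * sqrt Y"
    using assms by (metis real_sqrt_abs abs_of_nonneg real_sqrt_mult)
  define u where "u = sqrt X * a"
  define v where "v = sqrt Y * b"
  have u2: "u\<^sup>2 = X * a\<^sup>2" using assms by (simp add: u_def power_mult_distrib)
  have v2: "v\<^sup>2 = Y * b\<^sup>2" using assms by (simp add: v_def power_mult_distrib)
  have "0 \<le> (u - \<tau> * v)\<^sup>2" by simp
  then have "2 * \<tau> * (u * v) \<le> u\<^sup>2 + \<tau>\<^sup>2 * v\<^sup>2" by (simp add: power2_eq_square algebra_simps)
  then have "u * v \<le> 1/2 * (u\<^sup>2 / \<tau> + \<tau> * v\<^sup>2)"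
    using assms(3) by (simp add: field_simps power2_eq_square)
  moreover have "c * a * b = u * v" by (simp add: c u_def v_def)
  ultimately show ?thesis by (simp add: u2 v2)
qed

lemma chi_sq: "(chi \<Lambda> k)\<^sup>2 = chi \<Lambda> k"
  by (simp add: chi_def)

lemma term_bound:
  assumes R: "R \<ge> 0" and a: "a \<ge> 0" and b: "b \<ge> 0" and t: "\<tau> > 0"
  shows "R * (hh \<Lambda> k0 * a) * (gg \<Lambda> k1 * gg \<Lambda> k2 * b)
    \<le> 1/2 * (1/\<tau> * (R * chi \<Lambda> k0 * norm k1 * norm k2 * a\<^sup>2) + \<tau> * (R * (chi \<Lambda> k0 * norm k0 / (4 * pi\<^sup>2)) * ww \<Lambda> k1 * ww \<Lambda> k2 * b\<^sup>2))"
proof -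
  define X where "X = chi \<Lambda> k0 * norm k1 * norm k2"
  define Y where "Y = chi \<Lambda> k0 * norm k0 / (4 * pi\<^sup>2) * ww \<Lambda> k1 * ww \<Lambda> k2"
  define c where "c = hh \<Lambda> k0 * gg \<Lambda> k1 * gg \<Lambda> k2"
  have X0: "X \<ge> 0" by (simp add: X_def)
  have Y0: "Y \<ge> 0" by (simp add: Y_def)
  have c0: "c \<ge> 0" by (simp add: c_def)
  have gw: "(gg \<Lambda> k)\<^sup>2 = norm k * ww \<Lambda> k" for k
  proof (cases "k = 0")
    case True then show ?thesis by (simp add: gg_def ww_def)
  next
    case False
    have "chi \<Lambda> k = 0 \<or> chi \<Lambda> k = 1" by (rule chi_cases)
    then show ?thesis
      using False by (auto simp: gg_def ww_def power_divide power_mult_distrib field_simps power2_eq_square)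
  qed
  have hw: "(hh \<Lambda> k)\<^sup>2 = chi \<Lambda> k * norm k / (4 * pi\<^sup>2)" for k
    by (simp add: hh_def power_divide power_mult_distrib chi_sq)
  have "c\<^sup>2 = (hh \<Lambda> k0)\<^sup>2 * (gg \<Lambda> k1)\<^sup>2 * (gg \<Lambda> k2)\<^sup>2" by (simp add: c_def power_mult_distrib)
  also have "\<dots> = X * Y"
    unfolding gw hw X_def Y_def
    using chi_cases[of \<Lambda> k0] by (auto simp: power2_eq_square algebra_simps)
  finally have cXY: "c\<^sup>2 = X * Y" .
  have "c * a * b \<le> 1/2 * (X * a\<^sup>2 / \<tau> + \<tau> * (Y * b\<^sup>2))"
    by (rule amgm[OF X0 Y0 t cXY c0 a b])
  then have "R * (c * a * b) \<le> R * (1/2 * (X * a\<^sup>2 / \<tau> + \<tau> * (Y * b\<^sup>2)))"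
    using R by (intro mult_left_mono)
  then show ?thesis by (simp add: X_def Y_def c_def algebra_simps)
qed

lemma drop_sum:
  assumes "i \<le> N"
  shows "(\<Sum>l<N. f (drop_at N i ks l)) + f (ks i) = (\<Sum>j<Suc N. f (ks j))"
  using assms
proof (induction N arbitrary: i)
  case 0 then show ?case by simp
next
  case (Suc N)
  show ?case
  proof (cases "i = Suc N")
    case True
    then have "(\<Sum>l<Suc N. f (drop_at (Suc N) i ks l)) = (\<Sum>l<Suc N. f (ks l))"
      by (intro sum.cong) (auto simp: drop_at_def)
    then show ?thesis using True by simp
  next
    case False
    then have iN: "i \<le> N" using Suc.prems by simp
    have "(\<Sum>l<Suc N. f (drop_at (Suc N) i ks l)) = (\<Sum>l<N. f (drop_at N i ks l)) + f (ks (Suc N))"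
      using iN by (simp add: drop_at_def)
    then have "(\<Sum>l<Suc N. f (drop_at (Suc N) i ks l)) + f (ks i) = ((\<Sum>l<N. f (drop_at N i ks l)) + f (ks i)) + f (ks (Suc N))"
      by (simp add: ac_simps)
    also have "\<dots> = (\<Sum>j<Suc N. f (ks j)) + f (ks (Suc N))" by (simp only: Suc.IH[OF iN])
    also have "\<dots> = (\<Sum>j<Suc (Suc N). f (ks j))" by (simp only: sum.lessThan_Suc[of _ "Suc N"])
    finally show ?thesis .
  qed
qed

lemma hf_drop:
  assumes "i \<le> N"
  shows "Hf_val N (drop_at N i ks) = Hf_val (Suc N) ks - norm (fst (ks i))"
  using drop_sum[OF assms, of "\<lambda>z. norm (fst z)" ks] by (simp add: Hf_val_def)

lemma step4:
  fixes t :: "nat \<Rightarrow> real"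
  assumes t: "\<And>j. t j \<ge> 0" and i: "i < M" and p: "p \<ge> 0"
  shows "1 / (p + (\<Sum>j<M. t j)) * (\<Sum>j<M. t j * ((\<Sum>j<M. t j) - t j)) \<le> 2 * ((\<Sum>j<M. t j) - t i)"
proof -
  define H where "H = (\<Sum>j<M. t j)"
  have tiH: "t i \<le> H" unfolding H_def using t i by (intro member_le_sum) auto
  have H0: "H \<ge> 0" unfolding H_def using t by (simp add: sum_nonneg)
  have "(\<Sum>j<M. t j * (H - t j)) = H * H - (\<Sum>j<M. (t j)\<^sup>2)"
    by (simp add: algebra_simps sum_subtractf sum_distrib_left power2_eq_square H_def)
  also have "\<dots> \<le> H * H - (t i)\<^sup>2"
  proof -
    have "(t i)\<^sup>2 \<le> (\<Sum>j<M. (t j)\<^sup>2)" using i by (intro member_le_sum) auto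
    then show ?thesis by simp
  qed
  also have "\<dots> = (H - t i) * (H + t i)" by (simp add: algebra_simps power2_eq_square)
  also have "\<dots> \<le> (H - t i) * (2 * H)" using tiH by (intro mult_left_mono) auto
  finally have S: "(\<Sum>j<M. t j * (H - t j)) \<le> (H - t i) * (2 * H)" .
  have RH: "1 / (p + H) * H \<le> 1"
  proof (cases "p + H = 0")
    case True then show ?thesis by simp
  next
    case False
    then have "p + H > 0" using p H0 by simp
    then show ?thesis using p by (simp add: field_simps)
  qed
  have R0: "1 / (p + H) \<ge> 0" using p H0 by simp
  have "1 / (p + H) * (\<Sum>j<M. t j * (H - t j)) \<le> 1 / (p + H) * ((H - t i) * (2 * H))"
    using S R0 by (rule mult_left_mono)
  also have "\<dots> = 2 * (H - t i) * (1 / (p + H) * H)" by (simp add: algebra_simps)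
  also have "\<dots> \<le> 2 * (H - t i) * 1" using RH tiH by (intro mult_left_mono) auto
  finally show ?thesis by (simp add: H_def)
qed

lemma main_alg:
  fixes x :: "nat \<Rightarrow> real^3" and y :: "nat \<Rightarrow> nat \<Rightarrow> real^3" and a :: "nat \<Rightarrow> real" and b :: "nat \<Rightarrow> nat \<Rightarrow> real"
  assumes a: "\<And>i. a i \<ge> 0" and b: "\<And>i l. b i l \<ge> 0" and t: "\<tau> > 0" and p: "p \<ge> 0"
    and hy: "\<And>i. i < M \<Longrightarrow> (\<Sum>l<N. norm (y i l)) = (\<Sum>j<M. norm (x j)) - norm (x i)"
  shows "1 / (p + (\<Sum>j<M. norm (x j))) * (\<Sum>i<M. hh \<Lambda> (x i) * a i) * (\<Sum>i2<M. \<Sum>l<N. gg \<Lambda> (x i2) * gg \<Lambda> (y i2 l) * b i2 l)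
    \<le> 1/2 * (1/\<tau> * (\<Sum>i<M. 2 * chi \<Lambda> (x i) * ((\<Sum>j<M. norm (x j)) - norm (x i)) * (a i)\<^sup>2)
            + \<tau> * (\<Sum>i2<M. \<Sum>l<N. ww \<Lambda> (x i2) * ww \<Lambda> (y i2 l) * (b i2 l)\<^sup>2 / (4 * pi\<^sup>2)))"
proof -
  define H where "H = (\<Sum>j<M. norm (x j))"
  define R where "R = 1 / (p + H)"
  have H0: "H \<ge> 0" unfolding H_def by (simp add: sum_nonneg)
  have R0: "R \<ge> 0" unfolding R_def using H0 p by simp
  define U where "U i i2 l = R * chi \<Lambda> (x i) * norm (x i2) * norm (y i2 l) * (a i)\<^sup>2" for i i2 l
  define V where "V i i2 l = R * (chi \<Lambda> (x i) * norm (x i) / (4 * pi\<^sup>2)) * ww \<Lambda> (x i2) * ww \<Lambda> (y i2 l) * (b i2 l)\<^sup>2" for i i2 l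
  have "R * (\<Sum>i<M. hh \<Lambda> (x i) * a i) * (\<Sum>i2<M. \<Sum>l<N. gg \<Lambda> (x i2) * gg \<Lambda> (y i2 l) * b i2 l)
      = (\<Sum>i<M. \<Sum>i2<M. \<Sum>l<N. R * (hh \<Lambda> (x i) * a i) * (gg \<Lambda> (x i2) * gg \<Lambda> (y i2 l) * b i2 l))"
  proof -
    have "R * (\<Sum>i<M. hh \<Lambda> (x i) * a i) = (\<Sum>i<M. R * (hh \<Lambda> (x i) * a i))" by (rule sum_distrib_left)
    then have "R * (\<Sum>i<M. hh \<Lambda> (x i) * a i) * (\<Sum>i2<M. \<Sum>l<N. gg \<Lambda> (x i2) * gg \<Lambda> (y i2 l) * b i2 l)
      = (\<Sum>i<M. R * (hh \<Lambda> (x i) * a i)) * (\<Sum>i2<M. \<Sum>l<N. gg \<Lambda> (x i2) * gg \<Lambda> (y i2 l) * b i2 l)" by simp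
    also have "\<dots> = (\<Sum>i<M. R * (hh \<Lambda> (x i) * a i) * (\<Sum>i2<M. \<Sum>l<N. gg \<Lambda> (x i2) * gg \<Lambda> (y i2 l) * b i2 l))"
      by (rule sum_distrib_right)
    also have "\<dots> = (\<Sum>i<M. \<Sum>i2<M. \<Sum>l<N. R * (hh \<Lambda> (x i) * a i) * (gg \<Lambda> (x i2) * gg \<Lambda> (y i2 l) * b i2 l))"
      by (intro sum.cong refl) (simp only: sum_distrib_left)
    finally show ?thesis .
  qed
  also have "\<dots> \<le> (\<Sum>i<M. \<Sum>i2<M. \<Sum>l<N. 1/2 * (1/\<tau> * U i i2 l + \<tau> * V i i2 l))"
    unfolding U_def V_def by (intro sum_mono term_bound R0 a b t)
  also have "\<dots> = 1/2 * (1/\<tau> * (\<Sum>i<M. \<Sum>i2<M. \<Sum>l<N. U i i2 l) + \<tau> * (\<Sum>i<M. \<Sum>i2<M. \<Sum>l<N. V i i2 l))"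
    by (simp only: sum_distrib_left sum.distrib[symmetric])
  also have "\<dots> \<le> 1/2 * (1/\<tau> * (\<Sum>i<M. 2 * chi \<Lambda> (x i) * (H - norm (x i)) * (a i)\<^sup>2)
            + \<tau> * (\<Sum>i2<M. \<Sum>l<N. ww \<Lambda> (x i2) * ww \<Lambda> (y i2 l) * (b i2 l)\<^sup>2 / (4 * pi\<^sup>2)))"
  proof -
    have U: "(\<Sum>i<M. \<Sum>i2<M. \<Sum>l<N. U i i2 l) \<le> (\<Sum>i<M. 2 * chi \<Lambda> (x i) * (H - norm (x i)) * (a i)\<^sup>2)"
    proof (rule sum_mono)
      fix i assume i: "i \<in> {..<M}"
      have "(\<Sum>i2<M. \<Sum>l<N. U i i2 l) = (chi \<Lambda> (x i) * (a i)\<^sup>2) * (R * (\<Sum>i2<M. norm (x i2) * (\<Sum>l<N. norm (y i2 l))))"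
        unfolding U_def sum_distrib_left by (intro sum.cong refl) (simp only: mult_ac)
      also have "\<dots> = (chi \<Lambda> (x i) * (a i)\<^sup>2) * (R * (\<Sum>i2<M. norm (x i2) * (H - norm (x i2))))"
        using hy by (simp add: H_def)
      also have "\<dots> \<le> (chi \<Lambda> (x i) * (a i)\<^sup>2) * (2 * (H - norm (x i)))"
        using step4[of "\<lambda>j. norm (x j)" i M p] i p
        by (intro mult_left_mono) (auto simp: R_def H_def)
      also have "\<dots> = 2 * chi \<Lambda> (x i) * (H - norm (x i)) * (a i)\<^sup>2" by (simp only: mult_ac)
      finally show "(\<Sum>i2<M. \<Sum>l<N. U i i2 l) \<le> 2 * chi \<Lambda> (x i) * (H - norm (x i)) * (a i)\<^sup>2" .
    qed
    have V: "(\<Sum>i<M. \<Sum>i2<M. \<Sum>l<N. V i i2 l) \<le> (\<Sum>i2<M. \<Sum>l<N. ww \<Lambda> (x i2) * ww \<Lambda> (y i2 l) * (b i2 l)\<^sup>2 / (4 * pi\<^sup>2))"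
    proof -
      have RS: "R * (\<Sum>i<M. chi \<Lambda> (x i) * norm (x i)) \<le> 1"
      proof -
        have "(\<Sum>i<M. chi \<Lambda> (x i) * norm (x i)) \<le> H"
          unfolding H_def using chi_cases by (intro sum_mono) (metis mult_1 mult_zero_left norm_ge_zero order_refl)
        then have "R * (\<Sum>i<M. chi \<Lambda> (x i) * norm (x i)) \<le> R * H" using R0 by (rule mult_left_mono)
        also have "R * H \<le> 1"
        proof (cases "p + H = 0")
          case True then show ?thesis by (simp add: R_def)
        next
          case False
          then have "p + H > 0" using p H0 by simp
          then show ?thesis using p by (simp add: R_def field_simps)
        qed
        finally show ?thesis .
      qed
      have "(\<Sum>i<M. \<Sum>i2<M. \<Sum>l<N. V i i2 l) = (\<Sum>i2<M. \<Sum>l<N. \<Sum>i<M. V i i2 l)"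
      proof -
        have "(\<Sum>i<M. \<Sum>i2<M. \<Sum>l<N. V i i2 l) = (\<Sum>i2<M. \<Sum>i<M. \<Sum>l<N. V i i2 l)" by (rule sum.swap)
        also have "\<dots> = (\<Sum>i2<M. \<Sum>l<N. \<Sum>i<M. V i i2 l)" by (rule sum.cong[OF refl]) (rule sum.swap)
        finally show ?thesis .
      qed
      also have "\<dots> = (\<Sum>i2<M. \<Sum>l<N. (ww \<Lambda> (x i2) * ww \<Lambda> (y i2 l) * (b i2 l)\<^sup>2 / (4 * pi\<^sup>2)) * (R * (\<Sum>i<M. chi \<Lambda> (x i) * norm (x i))))"
        unfolding V_def sum_distrib_left by (intro sum.cong refl) (simp add: field_simps)
      also have "\<dots> \<le> (\<Sum>i2<M. \<Sum>l<N. (ww \<Lambda> (x i2) * ww \<Lambda> (y i2 l) * (b i2 l)\<^sup>2 / (4 * pi\<^sup>2)) * 1)"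
        using RS by (intro sum_mono mult_left_mono) auto
      finally show ?thesis by simp
    qed
    show ?thesis using U V t by (intro mult_left_mono add_mono) auto
  qed
  finally show ?thesis by (simp add: R_def H_def)
qed

lemma integrand_bound:
  assumes pe: "pol_ok eps" and ok: "okp (Suc (Suc n)) ks" and t: "\<tau> > 0"
  shows "cmod (cinner2 (sigmaEstar eps \<Lambda> (Suc n) psi1 P ks) (resolv (Suc (Suc n)) (DstarDstar eps \<Lambda> n psi) P ks))
    \<le> 9 * ((1 / sqrt (Suc (Suc n))) * ((1 / sqrt (Suc (Suc n))) * (1 / sqrt (Suc n)))) *
       (1/2 * (1/\<tau> * (\<Sum>i<Suc (Suc n). 2 * chi \<Lambda> (fst (ks i)) * Hf_val (Suc n) (drop_at (Suc n) i ks) * (norm (psi1 (P + fst (ks i)) (drop_at (Suc n) i ks)))\<^sup>2)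
            + \<tau> * (\<Sum>i2<Suc (Suc n). \<Sum>l<Suc n. ww \<Lambda> (fst (ks i2)) * ww \<Lambda> (fst (drop_at (Suc n) i2 ks l)) *
                 (norm (psi (P + fst (ks i2) + fst (drop_at (Suc n) i2 ks l)) (drop_at n l (drop_at (Suc n) i2 ks))))\<^sup>2 / (4 * pi\<^sup>2))))"
proof -
  define m where "m = Suc (Suc n)"
  define x where "x i = fst (ks i)" for i
  define y where "y i l = fst (drop_at (Suc n) i ks l)" for i l
  define a where "a i = norm (psi1 (P + x i) (drop_at (Suc n) i ks))" for i
  define b where "b i l = norm (psi (P + x i + y i l) (drop_at n l (drop_at (Suc n) i ks)))" for i l
  define H where "H = Hf_val m ks"
  define R where "R = 1 / ((norm P)\<^sup>2 + H)"
  define c1 where "c1 = 1 / sqrt (Suc (Suc n))"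
  define c2 where "c2 = (1 / sqrt (Suc (Suc n))) * (1 / sqrt (Suc n))"
  define S1 where "S1 = (\<Sum>i<m. hh \<Lambda> (x i) * a i)"
  define S2 where "S2 = (\<Sum>i2<m. \<Sum>l<Suc n. gg \<Lambda> (x i2) * gg \<Lambda> (y i2 l) * b i2 l)"
  have H0: "H \<ge> 0" by (simp add: H_def Hf_val_def sum_nonneg)
  have R0: "R \<ge> 0" using H0 by (simp add: R_def)
  have S10: "S1 \<ge> 0" by (simp add: S1_def a_def sum_nonneg)
  have S20: "S2 \<ge> 0" by (simp add: S2_def b_def sum_nonneg)
  have c10: "c1 \<ge> 0" and c20: "c2 \<ge> 0" by (simp_all add: c1_def c2_def)
  have u: "norm (sigmaEstar eps \<Lambda> (Suc n) psi1 P ks) \<le> 3 * (c1 * S1)"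
    using sigmaE_bound[OF pe ok]
    unfolding c1_def S1_def a_def x_def m_def by simp
  have v: "norm (DstarDstar eps \<Lambda> n psi P ks) \<le> 3 * (c2 * S2)"
    using DD_bound[OF pe ok] unfolding c2_def S2_def b_def x_def y_def m_def by simp
  have rv: "norm (resolv (Suc (Suc n)) (DstarDstar eps \<Lambda> n psi) P ks) = R * norm (DstarDstar eps \<Lambda> n psi P ks)"
  proof -
    have h0: "0 \<le> (norm P)\<^sup>2 + Hf_val (Suc (Suc n)) ks" using H0 by (simp add: H_def m_def)
    show ?thesis
      unfolding resolv_def norm_smult norm_of_real R_def H_def m_def using h0 by simp
  qed
  have "cmod (cinner2 (sigmaEstar eps \<Lambda> (Suc n) psi1 P ks) (resolv (Suc (Suc n)) (DstarDstar eps \<Lambda> n psi) P ks))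
     \<le> norm (sigmaEstar eps \<Lambda> (Suc n) psi1 P ks) * norm (resolv (Suc (Suc n)) (DstarDstar eps \<Lambda> n psi) P ks)"
    by (rule cinner2_bound)
  also have "\<dots> \<le> (3 * (c1 * S1)) * (R * (3 * (c2 * S2)))"
    unfolding rv using u v R0 by (intro mult_mono mult_left_mono) (auto simp: c10 S10)
  also have "\<dots> = 9 * (c1 * c2) * (R * S1 * S2)" by (simp add: algebra_simps)
  also have "\<dots> \<le> 9 * (c1 * c2) * (1/2 * (1/\<tau> * (\<Sum>i<m. 2 * chi \<Lambda> (x i) * ((\<Sum>j<m. norm (x j)) - norm (x i)) * (a i)\<^sup>2)
            + \<tau> * (\<Sum>i2<m. \<Sum>l<Suc n. ww \<Lambda> (x i2) * ww \<Lambda> (y i2 l) * (b i2 l)\<^sup>2 / (4 * pi\<^sup>2))))"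
  proof (rule mult_left_mono)
    have hy: "(\<Sum>l<Suc n. norm (y i l)) = (\<Sum>j<m. norm (x j)) - norm (x i)" if "i < m" for i
      using hf_drop[of i "Suc n" ks] that unfolding y_def x_def m_def Hf_val_def by simp
    have "R = 1 / ((norm P)\<^sup>2 + (\<Sum>j<m. norm (x j)))" by (simp add: R_def H_def Hf_val_def x_def)
    then show "R * S1 * S2 \<le> 1/2 * (1/\<tau> * (\<Sum>i<m. 2 * chi \<Lambda> (x i) * ((\<Sum>j<m. norm (x j)) - norm (x i)) * (a i)\<^sup>2)
            + \<tau> * (\<Sum>i2<m. \<Sum>l<Suc n. ww \<Lambda> (x i2) * ww \<Lambda> (y i2 l) * (b i2 l)\<^sup>2 / (4 * pi\<^sup>2)))"
      unfolding S1_def S2_def using main_alg[where a=a and b=b and \<tau>=\<tau> and p="(norm P)\<^sup>2" and M=m and N="Suc n" and y=y and x=x and \<Lambda>=\<Lambda>] hy t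
      by (simp add: a_def b_def)
  qed (simp add: c10 c20)
  also have "\<dots> = 9 * ((1 / sqrt (Suc (Suc n))) * ((1 / sqrt (Suc (Suc n))) * (1 / sqrt (Suc n)))) *
       (1/2 * (1/\<tau> * (\<Sum>i<Suc (Suc n). 2 * chi \<Lambda> (fst (ks i)) * Hf_val (Suc n) (drop_at (Suc n) i ks) * (norm (psi1 (P + fst (ks i)) (drop_at (Suc n) i ks)))\<^sup>2)
            + \<tau> * (\<Sum>i2<Suc (Suc n). \<Sum>l<Suc n. ww \<Lambda> (fst (ks i2)) * ww \<Lambda> (fst (drop_at (Suc n) i2 ks l)) *
                 (norm (psi (P + fst (ks i2) + fst (drop_at (Suc n) i2 ks l)) (drop_at n l (drop_at (Suc n) i2 ks))))\<^sup>2 / (4 * pi\<^sup>2))))"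
  proof -
    have "(\<Sum>i<m. 2 * chi \<Lambda> (x i) * ((\<Sum>j<m. norm (x j)) - norm (x i)) * (a i)\<^sup>2)
        = (\<Sum>i<Suc (Suc n). 2 * chi \<Lambda> (fst (ks i)) * Hf_val (Suc n) (drop_at (Suc n) i ks) * (norm (psi1 (P + fst (ks i)) (drop_at (Suc n) i ks)))\<^sup>2)"
    proof (rule sum.cong)
      fix i assume "i \<in> {..<Suc (Suc n)}"
      then have "Hf_val (Suc n) (drop_at (Suc n) i ks) = (\<Sum>j<m. norm (x j)) - norm (x i)"
        using hf_drop[of i "Suc n" ks] unfolding x_def m_def Hf_val_def by simp
      then show "2 * chi \<Lambda> (x i) * ((\<Sum>j<m. norm (x j)) - norm (x i)) * (a i)\<^sup>2 = 2 * chi \<Lambda> (fst (ks i)) * Hf_val (Suc n) (drop_at (Suc n) i ks) * (norm (psi1 (P + fst (ks i)) (drop_at (Suc n) i ks)))\<^sup>2"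
        by (simp add: a_def x_def)
    qed (simp add: m_def)
    then show ?thesis by (simp add: c1_def c2_def m_def b_def x_def y_def)
  qed
  finally show ?thesis .
qed

lemma fst_photon_meas: "fst \<in> measurable photon_measure (lborel :: (real^3) measure)"
  unfolding photon_measure_def by (rule measurable_fst)

lemma fst_photon_meas_b: "fst \<in> measurable photon_measure (borel :: (real^3) measure)"
  using fst_photon_meas by simp

lemma shift_drop_meas:
  assumes iN: "i \<le> N"
  shows "(\<lambda>(P, ks). (P + fst (ks i), drop_at N i ks)) \<in> measurable (sector_measure (Suc N)) (sector_measure N)"
proof -
  have c1: "(\<lambda>z. snd z i) \<in> measurable (lborel \<Otimes>\<^sub>M PP (Suc N)) photon_measure"
    using iN by (intro measurable_compose[OF measurable_snd] measurable_component_singleton) auto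
  have c2: "(\<lambda>z. fst z + fst (snd z i)) \<in> borel_measurable (lborel \<Otimes>\<^sub>M PP (Suc N))"
    using measurable_compose[OF c1 fst_photon_meas] by (intro borel_measurable_add) (auto simp: measurable_fst'')
  have c3: "(\<lambda>z. drop_at N i (snd z)) \<in> measurable (lborel \<Otimes>\<^sub>M PP (Suc N)) (PP N)"
    by (rule measurable_compose[OF measurable_snd meas_drop[OF iN]])
  have "(\<lambda>z. (fst z + fst (snd z i), drop_at N i (snd z))) \<in> measurable (lborel \<Otimes>\<^sub>M PP (Suc N)) (lborel \<Otimes>\<^sub>M PP N)"
    using c2 c3 by (intro measurable_Pair) auto
  then show ?thesis by (simp add: sector_measure_def case_prod_beta')
qed

lemma coord_meas:
  assumes "i < N" and c: "c \<in> borel_measurable (borel :: (real^3) measure)"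
  shows "(\<lambda>z. c (fst (snd z i))) \<in> borel_measurable (sector_measure N)"
proof -
  have c1: "(\<lambda>z. snd z i) \<in> measurable (lborel \<Otimes>\<^sub>M PP N) photon_measure"
    using assms by (intro measurable_compose[OF measurable_snd] measurable_component_singleton) auto
  have "(\<lambda>z. fst (snd z i)) \<in> borel_measurable (lborel \<Otimes>\<^sub>M PP N)"
    using measurable_compose[OF c1 fst_photon_meas_b] by simp
  from measurable_compose[OF this c] show ?thesis by (simp add: sector_measure_def)
qed

lemma Hf_meas: "(\<lambda>z. Hf_val N (snd z)) \<in> borel_measurable (sector_measure N)"
  unfolding Hf_val_def
  by (intro borel_measurable_sum coord_meas[where c=norm]) auto

lemma int_gen:
  assumes iN: "i \<le> N" and c: "c \<in> borel_measurable (borel :: (real^3) measure)"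
    and G: "G \<in> borel_measurable (sector_measure N)"
  shows "(\<integral>\<^sup>+(P, ks). ennreal (c (fst (ks i))) * G (P + fst (ks i), drop_at N i ks) \<partial>sector_measure (Suc N))
       = (\<integral>\<^sup>+k. ennreal (c (fst k)) \<partial>photon_measure) * (\<integral>\<^sup>+z. G z \<partial>sector_measure N)"
proof -
  have cm: "(\<lambda>k. ennreal (c (fst k))) \<in> borel_measurable photon_measure"
    using measurable_compose[OF fst_photon_meas_b c] by simp
  have f: "(\<lambda>(k, z). ennreal (c (fst k)) * G z) \<in> borel_measurable (photon_measure \<Otimes>\<^sub>M sector_measure N)"
  proof -
    have "(\<lambda>p. ennreal (c (fst (fst p)))) \<in> borel_measurable (photon_measure \<Otimes>\<^sub>M sector_measure N)"
      using measurable_compose[OF measurable_fst cm, of "sector_measure N"] by simp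
    moreover have "(\<lambda>p. G (snd p)) \<in> borel_measurable (photon_measure \<Otimes>\<^sub>M sector_measure N)"
      using measurable_compose[OF measurable_snd G, of photon_measure] by simp
    ultimately show ?thesis by (simp add: case_prod_beta')
  qed
  have "(\<integral>\<^sup>+(P, ks). ennreal (c (fst (ks i))) * G (P + fst (ks i), drop_at N i ks) \<partial>sector_measure (Suc N))
      = (\<integral>\<^sup>+k. \<integral>\<^sup>+z. ennreal (c (fst k)) * G z \<partial>sector_measure N \<partial>photon_measure)"
    using split_sector[OF iN f] by simp
  also have "\<dots> = (\<integral>\<^sup>+k. ennreal (c (fst k)) * (\<integral>\<^sup>+z. G z \<partial>sector_measure N) \<partial>photon_measure)"
    by (intro nn_integral_cong nn_integral_cmult G)
  also have "\<dots> = (\<integral>\<^sup>+k. ennreal (c (fst k)) \<partial>photon_measure) * (\<integral>\<^sup>+z. G z \<partial>sector_measure N)"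
    by (rule nn_integral_multc[OF cm])
  finally show ?thesis .
qed

lemma int_gen_meas:
  assumes iN: "i \<le> N" and c: "c \<in> borel_measurable (borel :: (real^3) measure)"
    and G: "G \<in> borel_measurable (sector_measure N)"
  shows "(\<lambda>(P, ks). ennreal (c (fst (ks i))) * G (P + fst (ks i), drop_at N i ks)) \<in> borel_measurable (sector_measure (Suc N))"
proof -
  have "(\<lambda>z. ennreal (c (fst (snd z i)))) \<in> borel_measurable (sector_measure (Suc N))"
    using coord_meas[of i "Suc N" c] iN c by simp
  moreover have "(\<lambda>z. G ((\<lambda>(P, ks). (P + fst (ks i), drop_at N i ks)) z)) \<in> borel_measurable (sector_measure (Suc N))"
    by (rule measurable_compose[OF shift_drop_meas[OF iN] G])
  ultimately show ?thesis by (simp add: case_prod_beta')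
qed

lemma space_okp:
  assumes z: "z \<in> space (sector_measure m)"
  shows "okp m (snd z)"
proof -
  have "snd z \<in> space (PP m)" using z unfolding sector_measure_def space_pair_measure by (simp add: mem_Times_iff)
  then have h: "\<And>i. i < m \<Longrightarrow> snd z i \<in> space photon_measure" unfolding space_PiM PiE_iff by blast
  have sp: "space photon_measure = UNIV \<times> {1, 2}" by (simp add: photon_measure_def space_pair_measure)
  show ?thesis unfolding okp_def
  proof (intro allI impI)
    fix i assume "i < m"
    then have "snd z i \<in> UNIV \<times> {1, 2}" using h sp by simp
    then show "snd (snd z i) \<in> {1, 2}" by (simp add: mem_Times_iff)
  qed
qed

lemma psi_meas:
  assumes "in_sector n psi"
  shows "(\<lambda>w. ennreal ((norm (psi (fst w) (snd w)))\<^sup>2)) \<in> borel_measurable (sector_measure n)"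
    and "(\<lambda>w. ennreal (Hf_val n (snd w) * (norm (psi (fst w) (snd w)))\<^sup>2)) \<in> borel_measurable (sector_measure n)"
proof -
  have p: "(\<lambda>w. psi (fst w) (snd w)) \<in> borel_measurable (sector_measure n)"
    using assms by (simp add: in_sector_def case_prod_beta')
  show "(\<lambda>w. ennreal ((norm (psi (fst w) (snd w)))\<^sup>2)) \<in> borel_measurable (sector_measure n)"
    using p by measurable
  show "(\<lambda>w. ennreal (Hf_val n (snd w) * (norm (psi (fst w) (snd w)))\<^sup>2)) \<in> borel_measurable (sector_measure n)"
    using p Hf_meas[of n] by measurable
qed

lemma sq_norm_nn:
  assumes "in_sector n psi"
  shows "(\<integral>\<^sup>+w. ennreal ((norm (psi (fst w) (snd w)))\<^sup>2) \<partial>sector_measure n) = ennreal (sq_norm n psi)"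
proof -
  have "integrable (sector_measure n) (\<lambda>w. (norm (psi (fst w) (snd w)))\<^sup>2)"
    using assms by (simp add: in_sector_def case_prod_beta')
  then show ?thesis
    unfolding sq_norm_def by (subst nn_integral_eq_integral) (auto simp: case_prod_beta')
qed

lemma Hf_nn:
  assumes "finite_Hf n psi"
  shows "(\<integral>\<^sup>+w. ennreal (Hf_val n (snd w) * (norm (psi (fst w) (snd w)))\<^sup>2) \<partial>sector_measure n) = ennreal (Hf_expect n psi)"
proof -
  have "integrable (sector_measure n) (\<lambda>w. Hf_val n (snd w) * (norm (psi (fst w) (snd w)))\<^sup>2)"
    using assms by (simp add: finite_Hf_def case_prod_beta')
  moreover have "0 \<le> Hf_val n ks" for ks by (simp add: Hf_val_def sum_nonneg)
  ultimately show ?thesis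
    unfolding Hf_expect_def by (subst nn_integral_eq_integral) (auto simp: case_prod_beta')
qed

lemma enn4: "0 \<le> a \<Longrightarrow> 0 \<le> b \<Longrightarrow> 0 \<le> c \<Longrightarrow> ennreal (a * (b * (c * d))) = ennreal a * (ennreal b * (ennreal c * ennreal d))"
  by (simp add: ennreal_mult')

lemma enn6: "0 \<le> a \<Longrightarrow> 0 \<le> b \<Longrightarrow> 0 \<le> c \<Longrightarrow> 0 \<le> d \<Longrightarrow> 0 \<le> e \<Longrightarrow>
   ennreal (a * (b * (c * (d * (e * f))))) = ennreal a * (ennreal b * (ennreal c * (ennreal d * (ennreal e * ennreal f))))"
  by (simp add: ennreal_mult')

lemma main_bound:
  assumes L: "\<Lambda> > 0" and pe: "pol_ok eps" and t: "\<tau> > 0"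
    and s0: "in_sector n psi" and s1: "in_sector (Suc n) psi1" "finite_Hf (Suc n) psi1"
  shows "cmod (sector_inner (Suc (Suc n)) (sigmaEstar eps \<Lambda> (Suc n) psi1) (resolv (Suc (Suc n)) (DstarDstar eps \<Lambda> n psi)))
     \<le> (9 * ((1 / sqrt (Suc (Suc n))) * ((1 / sqrt (Suc (Suc n))) * (1 / sqrt (Suc n))))) / \<tau> * (real (Suc (Suc n)) * (2 * (4/3*pi*\<Lambda>^3) * Hf_expect (Suc n) psi1))
       + (9 * ((1 / sqrt (Suc (Suc n))) * ((1 / sqrt (Suc (Suc n))) * (1 / sqrt (Suc n))))) * \<tau> / (8 * pi\<^sup>2) * (real (Suc (Suc n)) * (real (Suc n) * (2 * \<Lambda> * (2 * \<Lambda> * sq_norm n psi))))"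
proof -
  define m where "m = Suc (Suc n)"
  define N where "N = Suc n"
  define K where "K = 9 * ((1 / sqrt (Suc (Suc n))) * ((1 / sqrt (Suc (Suc n))) * (1 / sqrt (Suc n))))"
  define a1 where "a1 = K / \<tau>"
  define a2 where "a2 = K * \<tau> / (8 * pi\<^sup>2)"
  define E1 where "E1 = Hf_expect N psi1"
  define N0 where "N0 = sq_norm n psi"
  define Q where "Q = a1 * (real m * (2 * (4/3*pi*\<Lambda>^3) * E1)) + a2 * (real m * (real N * (2 * \<Lambda> * (2 * \<Lambda> * N0))))"
  have K0: "K \<ge> 0" by (simp add: K_def)
  have a10: "a1 \<ge> 0" using K0 t by (simp add: a1_def)
  have a20: "a2 \<ge> 0" using K0 t by (simp add: a2_def)
  have E10: "E1 \<ge> 0"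
    unfolding E1_def Hf_expect_def by (intro integral_nonneg_AE) (auto simp: Hf_val_def sum_nonneg)
  have N00: "N0 \<ge> 0"
    unfolding N0_def sq_norm_def by (intro integral_nonneg_AE) auto
  have Q0: "Q \<ge> 0" using a10 a20 E10 N00 L by (simp add: Q_def)
  define F1 where "F1 i z = chi \<Lambda> (fst (snd z i)) * Hf_val N (drop_at N i (snd z)) * (norm (psi1 (fst z + fst (snd z i)) (drop_at N i (snd z))))\<^sup>2" for i z
  define F2 where "F2 i l z = ww \<Lambda> (fst (snd z i)) * ww \<Lambda> (fst (drop_at N i (snd z) l)) *
      (norm (psi (fst z + fst (snd z i) + fst (drop_at N i (snd z) l)) (drop_at n l (drop_at N i (snd z)))))\<^sup>2" for i l z
  have F10: "F1 i z \<ge> 0" for i z by (simp add: F1_def Hf_val_def sum_nonneg)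
  have F20: "F2 i l z \<ge> 0" for i l z by (simp add: F2_def)
  define G1 where "G1 w = ennreal (Hf_val N (snd w) * (norm (psi1 (fst w) (snd w)))\<^sup>2)" for w
  define G0 where "G0 w = ennreal ((norm (psi (fst w) (snd w)))\<^sup>2)" for w
  define G2 where "G2 l = (\<lambda>(P, ks). ennreal (ww \<Lambda> (fst (ks l))) * G0 (P + fst (ks l), drop_at n l ks))" for l
  define T1 where "T1 i = (\<lambda>(P, ks). ennreal (chi \<Lambda> (fst (ks i))) * G1 (P + fst (ks i), drop_at N i ks))" for i
  define T2 where "T2 i l = (\<lambda>(P, ks). ennreal (ww \<Lambda> (fst (ks i))) * G2 l (P + fst (ks i), drop_at N i ks))" for i l
  have G1m: "G1 \<in> borel_measurable (sector_measure N)"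
    unfolding G1_def[abs_def] N_def using psi_meas(2)[OF s1(1)] .
  have G0m: "G0 \<in> borel_measurable (sector_measure n)"
    unfolding G0_def[abs_def] using psi_meas(1)[OF s0] .
  have G2m: "G2 l \<in> borel_measurable (sector_measure N)" if "l \<le> n" for l
    unfolding G2_def N_def by (rule int_gen_meas[OF that _ G0m]) simp
  have T1m: "T1 i \<in> borel_measurable (sector_measure m)" if "i < m" for i
  proof -
    have "i \<le> Suc n" using that by (simp add: m_def)
    from int_gen_meas[OF this _ G1m[unfolded N_def], of "chi \<Lambda>"] show ?thesis
      unfolding T1_def m_def N_def by simp
  qed
  have T2m: "T2 i l \<in> borel_measurable (sector_measure m)" if "i < m" "l < N" for i l
  proof -
    have i: "i \<le> Suc n" using that by (simp add: m_def)
    have "l \<le> n" using that by (simp add: N_def)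
    from G2m[OF this] have g: "G2 l \<in> borel_measurable (sector_measure (Suc n))" by (simp add: N_def)
    from int_gen_meas[OF i _ g, of "ww \<Lambda>"] show ?thesis
      unfolding T2_def m_def N_def by simp
  qed
  have eT1: "ennreal (F1 i z) = T1 i z" for i z
    by (simp add: F1_def T1_def G1_def case_prod_beta' ennreal_mult Hf_val_def sum_nonneg mult.assoc)
  have eT2: "ennreal (F2 i l z) = T2 i l z" for i l z
    by (simp add: F2_def T2_def G2_def G0_def case_prod_beta' ennreal_mult mult.assoc add.assoc)
  let ?f = "\<lambda>(P, ks). cinner2 (sigmaEstar eps \<Lambda> (Suc n) psi1 P ks) (resolv (Suc (Suc n)) (DstarDstar eps \<Lambda> n psi) P ks)"
  have pw: "ennreal (cmod (?f z)) \<le> ennreal a1 * (\<Sum>i<m. T1 i z) + ennreal a2 * (\<Sum>i<m. \<Sum>l<N. T2 i l z)"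
    if z: "z \<in> space (sector_measure m)" for z
  proof -
    obtain P ks where zz: "z = (P, ks)" by (cases z)
    have ok: "okp (Suc (Suc n)) ks" using space_okp[OF z] zz by (simp add: m_def)
    have S1: "(\<Sum>i<Suc (Suc n). 2 * chi \<Lambda> (fst (ks i)) * Hf_val (Suc n) (drop_at (Suc n) i ks) * (norm (psi1 (P + fst (ks i)) (drop_at (Suc n) i ks)))\<^sup>2)
        = 2 * (\<Sum>i<m. F1 i z)"
      unfolding F1_def N_def m_def zz sum_distrib_left by (intro sum.cong refl) (simp add: mult.assoc)
    have S2: "(\<Sum>i2<Suc (Suc n). \<Sum>l<Suc n. ww \<Lambda> (fst (ks i2)) * ww \<Lambda> (fst (drop_at (Suc n) i2 ks l)) *
                 (norm (psi (P + fst (ks i2) + fst (drop_at (Suc n) i2 ks l)) (drop_at n l (drop_at (Suc n) i2 ks))))\<^sup>2 / (4 * pi\<^sup>2))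
        = (\<Sum>i<m. \<Sum>l<N. F2 i l z) / (4 * pi\<^sup>2)"
      unfolding F2_def N_def m_def zz sum_divide_distrib by (intro sum.cong refl) simp
    have "cmod (?f z) \<le> K * (1/2 * (1/\<tau> * (2 * (\<Sum>i<m. F1 i z)) + \<tau> * ((\<Sum>i<m. \<Sum>l<N. F2 i l z) / (4 * pi\<^sup>2))))"
      using integrand_bound[OF pe ok t, of \<Lambda> psi1 P psi] unfolding S1 S2 K_def zz by simp
    also have "\<dots> = a1 * (\<Sum>i<m. F1 i z) + a2 * (\<Sum>i<m. \<Sum>l<N. F2 i l z)"
      using t by (simp add: a1_def a2_def field_simps)
    finally have r: "cmod (?f z) \<le> a1 * (\<Sum>i<m. F1 i z) + a2 * (\<Sum>i<m. \<Sum>l<N. F2 i l z)" .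
    have "ennreal (a1 * (\<Sum>i<m. F1 i z) + a2 * (\<Sum>i<m. \<Sum>l<N. F2 i l z))
        = ennreal a1 * (\<Sum>i<m. ennreal (F1 i z)) + ennreal a2 * (\<Sum>i<m. \<Sum>l<N. ennreal (F2 i l z))"
      using a10 a20 F10 F20 by (simp add: ennreal_mult sum_nonneg)
    then have "ennreal (cmod (?f z)) \<le> ennreal a1 * (\<Sum>i<m. ennreal (F1 i z)) + ennreal a2 * (\<Sum>i<m. \<Sum>l<N. ennreal (F2 i l z))"
      using ennreal_leI[OF r] by simp
    then show ?thesis by (simp add: eT1 eT2)
  qed
  define Cchi where "Cchi = (\<integral>\<^sup>+k. ennreal (chi \<Lambda> (fst k)) \<partial>photon_measure)"
  define Cw where "Cw = (\<integral>\<^sup>+k. ennreal (ww \<Lambda> (fst k)) \<partial>photon_measure)"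
  have int1: "(\<integral>\<^sup>+z. T1 i z \<partial>sector_measure m) = Cchi * ennreal E1" if "i < m" for i
  proof -
    have i: "i \<le> Suc n" using that by (simp add: m_def)
    have "(\<integral>\<^sup>+z. G1 z \<partial>sector_measure (Suc n)) = ennreal E1"
      using Hf_nn[OF s1(2)] by (simp add: G1_def E1_def N_def)
    then show ?thesis
      using int_gen[OF i _ G1m[unfolded N_def], of "chi \<Lambda>"] unfolding T1_def m_def N_def Cchi_def by simp
  qed
  have int2: "(\<integral>\<^sup>+z. T2 i l z \<partial>sector_measure m) = Cw * (Cw * ennreal N0)" if "i < m" "l < N" for i l
  proof -
    have i: "i \<le> Suc n" using that by (simp add: m_def)
    have l: "l \<le> n" using that by (simp add: N_def)
    have "(\<integral>\<^sup>+z. G0 z \<partial>sector_measure n) = ennreal N0"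
      using sq_norm_nn[OF s0] by (simp add: G0_def N0_def)
    then have g2: "(\<integral>\<^sup>+z. G2 l z \<partial>sector_measure (Suc n)) = Cw * ennreal N0"
      using int_gen[OF l _ G0m, of "ww \<Lambda>"] unfolding G2_def Cw_def by simp
    from G2m[OF l] have g: "G2 l \<in> borel_measurable (sector_measure (Suc n))" by (simp add: N_def)
    show ?thesis
      using int_gen[OF i _ g, of "ww \<Lambda>"] g2 unfolding T2_def m_def N_def Cw_def by simp
  qed
  have "(\<integral>\<^sup>+z. ennreal (cmod (?f z)) \<partial>sector_measure m)
      \<le> (\<integral>\<^sup>+z. ennreal a1 * (\<Sum>i<m. T1 i z) + ennreal a2 * (\<Sum>i<m. \<Sum>l<N. T2 i l z) \<partial>sector_measure m)"
    by (rule nn_integral_mono) (rule pw)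
  also have "\<dots> = ennreal a1 * (\<Sum>i<m. \<integral>\<^sup>+z. T1 i z \<partial>sector_measure m) + ennreal a2 * (\<Sum>i<m. \<Sum>l<N. \<integral>\<^sup>+z. T2 i l z \<partial>sector_measure m)"
  proof -
    have m1: "(\<lambda>z. \<Sum>i<m. T1 i z) \<in> borel_measurable (sector_measure m)"
      using T1m by (intro borel_measurable_sum) auto
    have m2: "(\<lambda>z. \<Sum>i<m. \<Sum>l<N. T2 i l z) \<in> borel_measurable (sector_measure m)"
      using T2m by (intro borel_measurable_sum) auto
    have "(\<integral>\<^sup>+z. ennreal a1 * (\<Sum>i<m. T1 i z) + ennreal a2 * (\<Sum>i<m. \<Sum>l<N. T2 i l z) \<partial>sector_measure m)
        = (\<integral>\<^sup>+z. ennreal a1 * (\<Sum>i<m. T1 i z) \<partial>sector_measure m) + (\<integral>\<^sup>+z. ennreal a2 * (\<Sum>i<m. \<Sum>l<N. T2 i l z) \<partial>sector_measure m)"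
      using m1 m2 by (intro nn_integral_add) auto
    also have "\<dots> = ennreal a1 * (\<integral>\<^sup>+z. (\<Sum>i<m. T1 i z) \<partial>sector_measure m) + ennreal a2 * (\<integral>\<^sup>+z. (\<Sum>i<m. \<Sum>l<N. T2 i l z) \<partial>sector_measure m)"
      using m1 m2 by (simp add: nn_integral_cmult)
    also have "(\<integral>\<^sup>+z. (\<Sum>i<m. T1 i z) \<partial>sector_measure m) = (\<Sum>i<m. \<integral>\<^sup>+z. T1 i z \<partial>sector_measure m)"
      using T1m by (intro nn_integral_sum) auto
    also have "(\<integral>\<^sup>+z. (\<Sum>i<m. \<Sum>l<N. T2 i l z) \<partial>sector_measure m) = (\<Sum>i<m. \<integral>\<^sup>+z. (\<Sum>l<N. T2 i l z) \<partial>sector_measure m)"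
      using T2m by (intro nn_integral_sum borel_measurable_sum) auto
    also have "\<dots> = (\<Sum>i<m. \<Sum>l<N. \<integral>\<^sup>+z. T2 i l z \<partial>sector_measure m)"
      using T2m by (intro sum.cong refl nn_integral_sum) auto
    finally show ?thesis .
  qed
  also have "\<dots> = ennreal a1 * (of_nat m * (Cchi * ennreal E1)) + ennreal a2 * (of_nat m * (of_nat N * (Cw * (Cw * ennreal N0))))"
    using int1 int2 by simp
  also have "\<dots> \<le> ennreal a1 * (of_nat m * (ennreal (2 * (4/3*pi*\<Lambda>^3)) * ennreal E1)) + ennreal a2 * (of_nat m * (of_nat N * (ennreal (2 * \<Lambda>) * (ennreal (2 * \<Lambda>) * ennreal N0))))"
  proof -
    have "Cchi = 2 * ennreal (4/3*pi*\<Lambda>^3)" unfolding Cchi_def by (rule chi_int[OF L])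
    also have "\<dots> = ennreal (2 * (4/3*pi*\<Lambda>^3))" by (subst ennreal_mult) (use L in auto)
    finally have c1: "Cchi = ennreal (2 * (4/3*pi*\<Lambda>^3))" .
    have c2: "Cw \<le> ennreal (2 * \<Lambda>)" unfolding Cw_def by (rule ww_int[OF L])
    show ?thesis unfolding c1 using c2
      by (intro add_mono mult_left_mono mult_mono order_refl) auto
  qed
  also have "\<dots> = ennreal Q"
  proof -
    have A: "ennreal (a1 * (real m * (2 * (4/3*pi*\<Lambda>^3) * E1))) = ennreal a1 * (of_nat m * (ennreal (2 * (4/3*pi*\<Lambda>^3)) * ennreal E1))"
      using enn4[of a1 "real m" "2 * (4/3*pi*\<Lambda>^3)" E1] a10 L by (simp add: ennreal_of_nat_eq_real_of_nat)
    have B: "ennreal (a2 * (real m * (real N * (2 * \<Lambda> * (2 * \<Lambda> * N0))))) = ennreal a2 * (of_nat m * (of_nat N * (ennreal (2 * \<Lambda>) * (ennreal (2 * \<Lambda>) * ennreal N0))))"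
      using enn6[of a2 "real m" "real N" "2 * \<Lambda>" "2 * \<Lambda>" N0] a20 L by (simp add: ennreal_of_nat_eq_real_of_nat)
    have "ennreal Q = ennreal (a1 * (real m * (2 * (4/3*pi*\<Lambda>^3) * E1))) + ennreal (a2 * (real m * (real N * (2 * \<Lambda> * (2 * \<Lambda> * N0)))))"
      unfolding Q_def using a10 a20 E10 N00 L by (intro ennreal_plus) auto
    then show ?thesis unfolding A B by simp
  qed
  finally have bnd: "(\<integral>\<^sup>+z. ennreal (cmod (?f z)) \<partial>sector_measure m) \<le> ennreal Q" .
  have "cmod (sector_inner (Suc (Suc n)) (sigmaEstar eps \<Lambda> (Suc n) psi1) (resolv (Suc (Suc n)) (DstarDstar eps \<Lambda> n psi))) \<le> Q"
  proof (cases "integrable (sector_measure m) ?f")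
    case True
    have "ennreal (cmod (integral\<^sup>L (sector_measure m) ?f)) \<le> (\<integral>\<^sup>+z. ennreal (cmod (?f z)) \<partial>sector_measure m)"
      using integral_norm_bound_ennreal[OF True] by simp
    also have "\<dots> \<le> ennreal Q" by (rule bnd)
    finally have "cmod (integral\<^sup>L (sector_measure m) ?f) \<le> Q" using Q0 by simp
    then show ?thesis by (simp add: sector_inner_def m_def)
  next
    case False
    then have "integral\<^sup>L (sector_measure m) ?f = 0" by (rule not_integrable_integral_eq)
    then show ?thesis using Q0 by (simp add: sector_inner_def m_def)
  qed
  then show ?thesis by (simp add: Q_def a1_def a2_def K_def m_def N_def E1_def N0_def)
qed

lemma arith_final:
  fixes \<alpha> \<Lambda> E1 N0 :: real and n :: nat
  assumes a: "\<alpha> > 0" and L: "\<Lambda> > 0" and E: "E1 \<ge> 0" and N0: "N0 \<ge> 0"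
  defines "\<tau> \<equiv> sqrt \<alpha> * \<Lambda> / sqrt (real (Suc n))"
  shows "\<alpha> powr (3/2) * ((9 * ((1 / sqrt (Suc (Suc n))) * ((1 / sqrt (Suc (Suc n))) * (1 / sqrt (Suc n))))) / \<tau> * (real (Suc (Suc n)) * (2 * (4/3*pi*\<Lambda>^3) * E1))
       + (9 * ((1 / sqrt (Suc (Suc n))) * ((1 / sqrt (Suc (Suc n))) * (1 / sqrt (Suc n))))) * \<tau> / (8 * pi\<^sup>2) * (real (Suc (Suc n)) * (real (Suc n) * (2 * \<Lambda> * (2 * \<Lambda> * N0)))))
     \<le> 100 * (\<alpha>\<^sup>2 * (\<Lambda> + \<Lambda>^3) * N0 + \<alpha> * (\<Lambda> + \<Lambda>\<^sup>2) * E1)"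
proof -
  define s where "s = sqrt \<alpha>"
  define sm where "sm = sqrt (real (Suc (Suc n)))"
  define sn where "sn = sqrt (real (Suc n))"
  have s0: "s > 0" using a by (simp add: s_def)
  have ss: "s * s = \<alpha>" using a by (simp add: s_def)
  have sm0: "sm > 0" by (simp add: sm_def)
  have smm: "sm * sm = real (Suc (Suc n))" by (simp add: sm_def del: of_nat_Suc)
  have sn0: "sn > 0" by (simp add: sn_def)
  have snn: "sn * sn = real (Suc n)" by (simp add: sn_def del: of_nat_Suc)
  have p32: "\<alpha> powr (3/2) = \<alpha> * s"
  proof -
    have "\<alpha> powr (3/2) = \<alpha> powr (1 + 1/2)" by simp
    also have "\<dots> = \<alpha> * \<alpha> powr (1/2)" using powr_add[of \<alpha> 1 "1/2"] a by simp
    also have "\<alpha> powr (1/2) = s" using a by (simp add: s_def powr_half_sqrt)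
    finally show ?thesis .
  qed
  have T1: "(9 * ((1 / sm) * ((1 / sm) * (1 / sn)))) / (s * \<Lambda> / sn) * ((sm * sm) * (2 * (4/3*pi*\<Lambda>^3) * E1)) = 24 * pi * \<Lambda>^2 * E1 / s"
    using s0 sm0 sn0 L by (simp add: field_simps power2_eq_square power3_eq_cube)
  have T2: "(9 * ((1 / sm) * ((1 / sm) * (1 / sn)))) * (s * \<Lambda> / sn) / (8 * pi\<^sup>2) * ((sm * sm) * ((sn * sn) * (2 * \<Lambda> * (2 * \<Lambda> * N0)))) = 9 / (2 * pi\<^sup>2) * s * \<Lambda>^3 * N0"
    using s0 sm0 sn0 L by (simp add: field_simps power2_eq_square power3_eq_cube)
  have "\<alpha> powr (3/2) * ((9 * ((1 / sqrt (Suc (Suc n))) * ((1 / sqrt (Suc (Suc n))) * (1 / sqrt (Suc n))))) / \<tau> * (real (Suc (Suc n)) * (2 * (4/3*pi*\<Lambda>^3) * E1))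
       + (9 * ((1 / sqrt (Suc (Suc n))) * ((1 / sqrt (Suc (Suc n))) * (1 / sqrt (Suc n))))) * \<tau> / (8 * pi\<^sup>2) * (real (Suc (Suc n)) * (real (Suc n) * (2 * \<Lambda> * (2 * \<Lambda> * N0)))))
     = \<alpha> * s * (24 * pi * \<Lambda>^2 * E1 / s + 9 / (2 * pi\<^sup>2) * s * \<Lambda>^3 * N0)"
    unfolding p32 T1[symmetric] T2[symmetric] \<tau>_def smm snn s_def[symmetric] sm_def[symmetric] sn_def[symmetric] ..
  also have "\<dots> = 24 * pi * (\<alpha> * \<Lambda>^2 * E1) + 9 / (2 * pi\<^sup>2) * (\<alpha>\<^sup>2 * \<Lambda>^3 * N0)"
    using s0 ss by (simp add: field_simps power2_eq_square)
  also have "\<dots> \<le> 100 * (\<alpha> * (\<Lambda> + \<Lambda>\<^sup>2) * E1) + 100 * (\<alpha>\<^sup>2 * (\<Lambda> + \<Lambda>^3) * N0)"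
  proof (rule add_mono)
    have f1: "24 * pi \<le> 100" using pi_less_4 by simp
    have f2: "\<alpha> * \<Lambda>^2 * E1 \<le> \<alpha> * (\<Lambda> + \<Lambda>\<^sup>2) * E1" using a L E by (intro mult_right_mono mult_left_mono) auto
    have f3: "0 \<le> \<alpha> * \<Lambda>^2 * E1" using a E by simp
    show "24 * pi * (\<alpha> * \<Lambda>^2 * E1) \<le> 100 * (\<alpha> * (\<Lambda> + \<Lambda>\<^sup>2) * E1)"
      by (rule mult_mono[OF f1 f2]) (simp_all add: f3)
  next
    have g1: "9 / (2 * pi\<^sup>2) \<le> 100"
    proof -
      have "9 \<le> pi * pi" using mult_mono[of 3 pi 3 pi] pi_gt3 by simp
      then have "pi\<^sup>2 \<ge> 9" by (simp add: power2_eq_square)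
      then show ?thesis by (simp add: field_simps)
    qed
    have g2: "\<alpha>\<^sup>2 * \<Lambda>^3 * N0 \<le> \<alpha>\<^sup>2 * (\<Lambda> + \<Lambda>^3) * N0" using a L N0 by (intro mult_right_mono mult_left_mono) auto
    have g3: "0 \<le> \<alpha>\<^sup>2 * \<Lambda>^3 * N0" using L N0 by simp
    show "9 / (2 * pi\<^sup>2) * (\<alpha>\<^sup>2 * \<Lambda>^3 * N0) \<le> 100 * (\<alpha>\<^sup>2 * (\<Lambda> + \<Lambda>^3) * N0)"
      by (rule mult_mono[OF g1 g2]) (simp_all add: g3)
  qed
  finally show ?thesis by (simp add: algebra_simps)
qed

theorem lemmaA2:
  shows "\<exists>C>0. \<forall>\<Lambda>>0. \<forall>eps. pol_ok eps \<longrightarrow>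
    (\<forall>\<alpha>>0. \<forall>n psi_n psi_n1.
       in_sector n psi_n \<and> finite_Hf n psi_n \<and>
       in_sector (Suc n) psi_n1 \<and> finite_Hf (Suc n) psi_n1 \<longrightarrow>
       \<alpha> powr (3/2) *
         cmod (sector_inner (Suc (Suc n)) (sigmaEstar eps \<Lambda> (Suc n) psi_n1)
                 (resolv (Suc (Suc n)) (DstarDstar eps \<Lambda> n psi_n)))
       \<le> C * (\<alpha>\<^sup>2 * (\<Lambda> + \<Lambda>^3) * sq_norm n psi_n
              + \<alpha> * (\<Lambda> + \<Lambda>\<^sup>2) * Hf_expect (Suc n) psi_n1))"
proof (intro exI[of _ 100] conjI allI impI)
  fix \<Lambda> :: real and eps and \<alpha> :: real and n psi_n psi_n1
  assume L: "\<Lambda> > 0" and pe: "pol_ok eps" and a: "\<alpha> > 0"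
    and H: "in_sector n psi_n \<and> finite_Hf n psi_n \<and> in_sector (Suc n) psi_n1 \<and> finite_Hf (Suc n) psi_n1"
  define \<tau> where "\<tau> = sqrt \<alpha> * \<Lambda> / sqrt (real (Suc n))"
  have t: "\<tau> > 0" using a L by (simp add: \<tau>_def)
  have E: "Hf_expect (Suc n) psi_n1 \<ge> 0"
    unfolding Hf_expect_def by (intro integral_nonneg_AE) (auto simp: Hf_val_def sum_nonneg)
  have N0: "sq_norm n psi_n \<ge> 0"
    unfolding sq_norm_def by (intro integral_nonneg_AE) auto
  have mb: "cmod (sector_inner (Suc (Suc n)) (sigmaEstar eps \<Lambda> (Suc n) psi_n1) (resolv (Suc (Suc n)) (DstarDstar eps \<Lambda> n psi_n)))
     \<le> (9 * ((1 / sqrt (Suc (Suc n))) * ((1 / sqrt (Suc (Suc n))) * (1 / sqrt (Suc n))))) / \<tau> * (real (Suc (Suc n)) * (2 * (4/3*pi*\<Lambda>^3) * Hf_expect (Suc n) psi_n1))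
       + (9 * ((1 / sqrt (Suc (Suc n))) * ((1 / sqrt (Suc (Suc n))) * (1 / sqrt (Suc n))))) * \<tau> / (8 * pi\<^sup>2) * (real (Suc (Suc n)) * (real (Suc n) * (2 * \<Lambda> * (2 * \<Lambda> * sq_norm n psi_n))))"
    using H by (intro main_bound L pe t) auto
  have "\<alpha> powr (3/2) * cmod (sector_inner (Suc (Suc n)) (sigmaEstar eps \<Lambda> (Suc n) psi_n1) (resolv (Suc (Suc n)) (DstarDstar eps \<Lambda> n psi_n)))
     \<le> \<alpha> powr (3/2) * ((9 * ((1 / sqrt (Suc (Suc n))) * ((1 / sqrt (Suc (Suc n))) * (1 / sqrt (Suc n))))) / \<tau> * (real (Suc (Suc n)) * (2 * (4/3*pi*\<Lambda>^3) * Hf_expect (Suc n) psi_n1))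
       + (9 * ((1 / sqrt (Suc (Suc n))) * ((1 / sqrt (Suc (Suc n))) * (1 / sqrt (Suc n))))) * \<tau> / (8 * pi\<^sup>2) * (real (Suc (Suc n)) * (real (Suc n) * (2 * \<Lambda> * (2 * \<Lambda> * sq_norm n psi_n)))))"
    using mb by (rule mult_left_mono) simp
  also have "\<dots> \<le> 100 * (\<alpha>\<^sup>2 * (\<Lambda> + \<Lambda>^3) * sq_norm n psi_n + \<alpha> * (\<Lambda> + \<Lambda>\<^sup>2) * Hf_expect (Suc n) psi_n1)"
    unfolding \<tau>_def by (rule arith_final[OF a L E N0])
  finally show "\<alpha> powr (3/2) * cmod (sector_inner (Suc (Suc n)) (sigmaEstar eps \<Lambda> (Suc n) psi_n1) (resolv (Suc (Suc n)) (DstarDstar eps \<Lambda> n psi_n)))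
     \<le> 100 * (\<alpha>\<^sup>2 * (\<Lambda> + \<Lambda>^3) * sq_norm n psi_n + \<alpha> * (\<Lambda> + \<Lambda>\<^sup>2) * Hf_expect (Suc n) psi_n1)" .
qed simp

end
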